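(* Let $f(X)$ be a multi-Bernoulli mixture RFS density of the form $$f(X)=\sum_{a=(h_1,\dots,h_N)\in\mathcal{A}} w_a\sum_{\biguplus_{i=1}^N X_i=X}\prod_{i=1}^N f_{h_i}(X_i),$$ and consider multi-Bernoulli densities $g(X)=\sum_{\biguplus_{j=1}^N X_j=X}\prod_{j=1}^N g_j(X_j)$ whose components $g_1,\dots,g_N$ are Bernoulli densities. Then the set of Bernoulli components $[g_j]=(g_1,\dots,g_N)$ solving $$\operatorname*{argmax}_{[g_j]}\ \sum_{a\in\mathcal{A}} w_a\int\cdots\int \prod_{i=1}^N f_{h_i}(X_i)\,\log\Big(\sum_{\pi\in\Pi_N}\prod_{i=1}^N g_{\pi(i)}(X_i)\Big)\,\delta X_1\cdots\delta X_N$$ is the same as the set of $[g_j]$ solving $$\operatorname*{argmin}_{[g_j]}\int f(X)\log\frac{f(X)}{g(X)}\,\delta X\;=\;\operatorname*{argmax}_{[g_j]}\int f(X)\log g(X)\,\delta X .$$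
   Context: Single-target states lie in $\mathcal{X}\subseteq\mathbb{R}^d$; finite subsets of $\mathcal{X}$ are denoted by capital letters. The set integral is $\int v(X)\,\delta X = v(\emptyset)+\sum_{n=1}^\infty\frac{1}{n!}\int\cdots\int v(\{x_1,\dots,x_n\})\,\mathrm{d}x_1\cdots\mathrm{d}x_n$. A Bernoulli density with existence probability $r\in[0,1]$ and state density $p(x)$ is $b(\emptyset)=1-r$, $b(\{x\})=r\,p(x)$, $b(X)=0$ for $|X|>1$. In $f$: $\mathcal{H}$ is an index set of single-target hypotheses, each $f_h$ ($h\in\mathcal{H}$) is a Bernoulli density with existence probability $r_h$ and state density $f_h(x)$; $\mathcal{A}\subseteq\mathcal{H}^N$ is a finite set of global association hypotheses $a=(h_1,\dots,h_N)$ with weights $w_a\ge 0$, $\sum_{a\in\mathcal{A}}w_a=1$. The notation $\sum_{\biguplus_{i=1}^N X_i=X}$ denotes summation over all ordered tuples of mutually disjoint subsets $X_1,\dots,X_N$ whose union is $X$. $\Pi_N$ is the set of all permutations (bijections) of $\{1,\dots,N\}$. Conventions $0\log 0=0$ are used. *)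

theory Defs
  imports "HOL-Probability.Probability" "HOL-Combinatorics.Permutations"
begin

definition is_state_pdf :: "('a::euclidean_space \<Rightarrow> real) \<Rightarrow> bool" where
  "is_state_pdf p \<longleftrightarrow> p \<in> borel_measurable lborel \<and> (\<forall>x. 0 \<le> p x)
      \<and> (\<integral>\<^sup>+ x. ennreal (p x) \<partial>lborel) = 1"

definition bernoulli_density :: "real \<Rightarrow> ('a \<Rightarrow> real) \<Rightarrow> 'a set \<Rightarrow> real" where
  "bernoulli_density r p X =
     (if X = {} then 1 - r else if card X = 1 \<and> finite X then r * p (the_elem X) else 0)"

definition is_bernoulli :: "('a::euclidean_space set \<Rightarrow> real) \<Rightarrow> bool" where
  "is_bernoulli b \<longleftrightarrow> (\<exists>r p. 0 \<le> r \<and> r \<le> 1 \<and> is_state_pdf p \<and> b = bernoulli_density r p)"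

definition disjoint_tuples :: "nat \<Rightarrow> 'a set \<Rightarrow> (nat \<Rightarrow> 'a set) set" where
  "disjoint_tuples N X = {Xs. (\<forall>i<N. \<forall>j<N. i \<noteq> j \<longrightarrow> Xs i \<inter> Xs j = {})
       \<and> (\<Union>i<N. Xs i) = X \<and> (\<forall>i\<ge>N. Xs i = {})}"

definition mb_density :: "('a set \<Rightarrow> real) list \<Rightarrow> 'a set \<Rightarrow> real" where
  "mb_density gs X = (\<Sum>Xs\<in>disjoint_tuples (length gs) X. \<Prod>i<length gs. (gs ! i) (Xs i))"

definition mbm_density :: "'h list set \<Rightarrow> ('h list \<Rightarrow> real) \<Rightarrow> ('h \<Rightarrow> 'a set \<Rightarrow> real)
      \<Rightarrow> nat \<Rightarrow> 'a set \<Rightarrow> real" where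
  "mbm_density A w f N X = (\<Sum>a\<in>A. w a *
      (\<Sum>Xs\<in>disjoint_tuples N X. \<Prod>i<N. f (a ! i) (Xs i)))"

(* set integral of a nonnegative function:
   v({}) + sum_{n>=1} 1/n! int ... int v({x_1,...,x_n}) dx_1...dx_n
   (the n = 0 term of the series below equals v({})) *)
definition rfs_nn_integral :: "('a::euclidean_space set \<Rightarrow> ennreal) \<Rightarrow> ennreal" where
  "rfs_nn_integral v = (\<Sum>n. ennreal (1 / fact n) *
       (\<integral>\<^sup>+ xs. v (xs ` {..<n}) \<partial>(PiM {..<n} (\<lambda>_. lborel))))"

definition rfs_integral :: "('a::euclidean_space set \<Rightarrow> ereal) \<Rightarrow> ereal" where
  "rfs_integral v = enn2ereal (rfs_nn_integral (\<lambda>X. e2ennreal (v X)))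
                  - enn2ereal (rfs_nn_integral (\<lambda>X. e2ennreal (- v X)))"

primrec multi_nn_integral :: "nat \<Rightarrow> ((nat \<Rightarrow> 'a::euclidean_space set) \<Rightarrow> ennreal) \<Rightarrow> ennreal" where
  "multi_nn_integral 0 v = v (\<lambda>_. {})"
| "multi_nn_integral (Suc N) v =
     multi_nn_integral N (\<lambda>Xs. rfs_nn_integral (\<lambda>Y. v (Xs(N := Y))))"

definition multi_integral :: "nat \<Rightarrow> ((nat \<Rightarrow> 'a::euclidean_space set) \<Rightarrow> ereal) \<Rightarrow> ereal" where
  "multi_integral N v = enn2ereal (multi_nn_integral N (\<lambda>Xs. e2ennreal (v Xs)))
                      - enn2ereal (multi_nn_integral N (\<lambda>Xs. e2ennreal (- v Xs)))"

definition xlogy :: "real \<Rightarrow> real \<Rightarrow> ereal" where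
  "xlogy p s = (if p = 0 then 0 else if s = 0 then -\<infinity> else ereal (p * ln s))"

definition kl_term :: "real \<Rightarrow> real \<Rightarrow> ereal" where
  "kl_term p q = (if p = 0 then 0 else if q = 0 then \<infinity> else ereal (p * ln (p / q)))"

definition argmax_on :: "'b set \<Rightarrow> ('b \<Rightarrow> ereal) \<Rightarrow> 'b set" where
  "argmax_on S F = {x\<in>S. \<forall>y\<in>S. F y \<le> F x}"

definition argmin_on :: "'b set \<Rightarrow> ('b \<Rightarrow> ereal) \<Rightarrow> 'b set" where
  "argmin_on S F = {x\<in>S. \<forall>y\<in>S. F x \<le> F y}"

end

theory Submission
  imports Defs
begin

lemma ps_lborel: "product_sigma_finite (\<lambda>_::'i. lborel :: 'a::euclidean_space measure)"
  by (simp add: product_sigma_finite_def sigma_finite_lborel)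

lemma bd_empty[simp]: "bernoulli_density r p {} = 1 - r"
  by (simp add: bernoulli_density_def)
lemma bd_single[simp]: "bernoulli_density r p {x} = r * p x"
  by (simp add: bernoulli_density_def)
lemma bd_big: "finite Y \<Longrightarrow> 2 \<le> card Y \<Longrightarrow> bernoulli_density r p Y = 0"
  by (auto simp add: bernoulli_density_def)

lemma diag_null:
  assumes "i < (n::nat)" "j < n" "i \<noteq> j"
  shows "{xs \<in> space (PiM {..<n} (\<lambda>_. lborel::'a::euclidean_space measure)). xs i = xs j} \<in> null_sets (PiM {..<n} (\<lambda>_. lborel))"
proof -
  let ?M = "PiM {..<n} (\<lambda>_. lborel::'a measure)"
  let ?D = "{xs \<in> space ?M. xs i = xs j}"
  have D: "?D \<in> sets ?M" by (rule measurable_equality_set) (use assms in auto)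
  define I' where "I' = {..<n} - {i}"
  have ins: "insert i I' = {..<n}" "finite I'" "i \<notin> I'" using assms by (auto simp: I'_def)
  have "emeasure ?M ?D = (\<integral>\<^sup>+ xs. indicator ?D xs \<partial>?M)" using D by simp
  also have "\<dots> = (\<integral>\<^sup>+ x. (\<integral>\<^sup>+ y. indicator ?D (x(i := y)) \<partial>lborel) \<partial>PiM I' (\<lambda>_. lborel))"
    using product_sigma_finite.product_nn_integral_insert[OF ps_lborel, of I' i "indicator ?D"]
    unfolding ins(1) using ins(2,3) D by (simp add: borel_measurable_indicator)
  also have "\<dots> = (\<integral>\<^sup>+ x. 0 \<partial>PiM I' (\<lambda>_. lborel::'a measure))"
  proof (rule nn_integral_cong)
    fix x assume x: "x \<in> space (PiM I' (\<lambda>_. lborel::'a measure))"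
    have ae: "AE y in lborel. indicator ?D (x(i := y)) = (0::ennreal)"
      using AE_lborel_singleton[of "x j"] 
    proof eventually_elim
      fix y assume "y \<noteq> x j"
      then have "x(i := y) \<notin> ?D" using assms(3) by simp
      then show "indicator ?D (x(i := y)) = (0::ennreal)" by (rule indicator_simps(2))
    qed
    show "(\<integral>\<^sup>+ y. indicator ?D (x(i := y)) \<partial>lborel) = 0"
      using nn_integral_cong_AE[OF ae] by simp
  qed
  finally show ?thesis using D by (simp add: null_sets_def)
qed

lemma AE_inj: "AE xs in PiM {..<n::nat} (\<lambda>_. lborel::'a::euclidean_space measure). inj_on xs {..<n}"
proof -
  have "AE xs in PiM {..<n} (\<lambda>_. lborel::'a measure). \<forall>p\<in>{..<n}\<times>{..<n}. fst p \<noteq> snd p \<longrightarrow> xs (fst p) \<noteq> xs (snd p)"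
  proof (subst AE_finite_all)
    show "finite ({..<n}\<times>{..<n})" by simp
    show "\<forall>p\<in>{..<n}\<times>{..<n}. AE xs in PiM {..<n} (\<lambda>_. lborel::'a measure). fst p \<noteq> snd p \<longrightarrow> xs (fst p) \<noteq> xs (snd p)"
    proof
      fix p assume p: "p \<in> {..<n}\<times>{..<n}"
      show "AE xs in PiM {..<n} (\<lambda>_. lborel::'a measure). fst p \<noteq> snd p \<longrightarrow> xs (fst p) \<noteq> xs (snd p)"
      proof (cases "fst p = snd p")
        case False
        show ?thesis
          by (rule AE_I'[OF diag_null[of "fst p" n "snd p"]]) (use p False in auto)
      qed simp
    qed
  qed
  then show ?thesis
    by eventually_elim (auto simp: inj_on_def)
qed

definition xlogy_m :: "real \<Rightarrow> real \<Rightarrow> ereal" where "xlogy_m = xlogy"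

lemma borel_xlogy[measurable]:
  assumes [measurable]: "f \<in> borel_measurable M" "g \<in> borel_measurable M"
  shows "(\<lambda>x. xlogy (f x) (g x)) \<in> borel_measurable M"
  unfolding xlogy_def by measurable

lemma borel_kl[measurable]:
  assumes [measurable]: "f \<in> borel_measurable M" "g \<in> borel_measurable M"
  shows "(\<lambda>x. kl_term (f x) (g x)) \<in> borel_measurable M"
  unfolding kl_term_def by measurable

lemma rfs_small:
  fixes w :: "'a::euclidean_space set \<Rightarrow> ennreal"
  assumes zero: "\<And>Y. finite Y \<Longrightarrow> 2 \<le> card Y \<Longrightarrow> w Y = 0"
    and meas: "(\<lambda>y. w {y}) \<in> borel_measurable lborel"
  shows "rfs_nn_integral w = w {} + (\<integral>\<^sup>+y. w {y} \<partial>lborel)"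
proof -
  let ?t = "\<lambda>n::nat. ennreal (1 / fact n) *
       (\<integral>\<^sup>+ xs. w (xs ` {..<n}) \<partial>(PiM {..<n} (\<lambda>_. lborel::'a measure)))"
  have t0: "?t n = 0" if n: "n \<notin> {..<2}" for n
  proof -
    have "AE xs in PiM {..<n} (\<lambda>_. lborel::'a measure). w (xs ` {..<n}) = 0"
      using AE_inj[of n]
    proof eventually_elim
      fix xs :: "nat \<Rightarrow> 'a" assume "inj_on xs {..<n}"
      then have "card (xs ` {..<n}) = n" by (simp add: card_image)
      then show "w (xs ` {..<n}) = 0" using n by (intro zero) auto
    qed
    then have "(\<integral>\<^sup>+ xs. w (xs ` {..<n}) \<partial>(PiM {..<n} (\<lambda>_. lborel::'a measure))) = 0"
      using nn_integral_cong_AE by fastforce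
    then show ?thesis by simp
  qed
  have "rfs_nn_integral w = (\<Sum>n<2. ?t n)"
    unfolding rfs_nn_integral_def by (rule suminf_finite) (use t0 in auto)
  also have "\<dots> = ?t 0 + ?t 1" by (simp add: numeral_2_eq_2)
  also have "?t 0 = w {}"
    using product_sigma_finite.nn_integral_empty[OF ps_lborel, of "\<lambda>xs. w (xs ` {})"] by simp
  also have "?t 1 = (\<integral>\<^sup>+y. w {y} \<partial>lborel)"
  proof -
    have "{..<1::nat} = {0}" by auto
    then have "?t 1 = (\<integral>\<^sup>+ xs. w {xs 0} \<partial>(PiM {0::nat} (\<lambda>_. lborel::'a measure)))" by simp
    also have "\<dots> = (\<integral>\<^sup>+y. w {y} \<partial>lborel)"
      by (rule product_sigma_finite.product_nn_integral_singleton[OF ps_lborel, of "\<lambda>y. w {y}"]) (use meas in simp)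
    finally show ?thesis .
  qed
  finally show ?thesis .
qed

definition cfgS :: "nat set \<Rightarrow> (nat \<Rightarrow> 'a) \<Rightarrow> nat \<Rightarrow> 'a set" where
  "cfgS S x = (\<lambda>i. if i \<in> S then {x i} else {})"

definition cfgI :: "(nat \<Rightarrow> nat) \<Rightarrow> nat \<Rightarrow> (nat \<Rightarrow> 'a) \<Rightarrow> nat \<Rightarrow> 'a set" where
  "cfgI \<iota> n xs = (\<lambda>i. if i \<in> \<iota> ` {..<n} then {xs (inv_into {..<n} \<iota> i)} else {})"

definition Inj :: "nat \<Rightarrow> nat \<Rightarrow> (nat \<Rightarrow> nat) set" where
  "Inj N n = {\<iota> \<in> {..<n} \<rightarrow>\<^sub>E {..<N}. inj_on \<iota> {..<n}}"

lemma finite_Inj[simp]: "finite (Inj N n)"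
  unfolding Inj_def by (rule finite_subset[of _ "{..<n} \<rightarrow>\<^sub>E {..<N}"]) (auto intro: finite_PiE)

lemma cfgS_upd_empty: "N \<notin> S \<Longrightarrow> (cfgS S x)(N := {}) = cfgS S x"
  by (rule ext) (auto simp: cfgS_def)

lemma cfgS_upd_single: "(cfgS S x)(N := {y}) = cfgS (insert N S) (x(N := y))"
  by (rule ext) (auto simp: cfgS_def)

lemma cfgS_empty: "cfgS {} x = (\<lambda>_. {})"
  by (auto simp: cfgS_def)

lemma rfs_zero: "rfs_nn_integral (\<lambda>_. 0) = 0"
  by (simp add: rfs_nn_integral_def)

lemma multi_cfg:
  fixes v :: "(nat \<Rightarrow> 'a::euclidean_space set) \<Rightarrow> ennreal"
  assumes "\<And>Xs. (\<exists>i<N. finite (Xs i) \<and> 2 \<le> card (Xs i)) \<Longrightarrow> v Xs = 0"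
    and "\<And>S. S \<subseteq> {..<N} \<Longrightarrow> (\<lambda>x. v (cfgS S x)) \<in> borel_measurable (PiM S (\<lambda>_. lborel))"
  shows "multi_nn_integral N v = (\<Sum>S\<in>Pow {..<N}. \<integral>\<^sup>+x. v (cfgS S x) \<partial>PiM S (\<lambda>_. lborel))"
  using assms
proof (induction N arbitrary: v)
  case 0
  have "(\<Sum>S\<in>Pow {..<0::nat}. \<integral>\<^sup>+x. v (cfgS S x) \<partial>PiM S (\<lambda>_. lborel::'a measure))
      = (\<integral>\<^sup>+x. v (cfgS {} x) \<partial>PiM {} (\<lambda>_. lborel::'a measure))" by simp
  also have "\<dots> = v (\<lambda>_. {})"
    using product_sigma_finite.nn_integral_empty[OF ps_lborel, of "\<lambda>x. v (cfgS {} x)"]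
    by (simp add: cfgS_empty)
  finally show ?case by simp
next
  case (Suc N)
  note zero = Suc.prems(1) and meas = Suc.prems(2)
  have measI: "(\<lambda>x. v (cfgS (insert N S) x)) \<in> borel_measurable (PiM (insert N S) (\<lambda>_. lborel))"
    if "S \<subseteq> {..<N}" for S
    by (rule meas) (use that in auto)
  have measS: "(\<lambda>x. v (cfgS S x)) \<in> borel_measurable (PiM S (\<lambda>_. lborel))"
    if "S \<subseteq> {..<N}" for S
    by (rule meas) (use that in auto)
  define u where "u Xs = rfs_nn_integral (\<lambda>Y. v (Xs(N := Y)))" for Xs :: "nat \<Rightarrow> 'a set"
  have multi_eq: "multi_nn_integral (Suc N) v = multi_nn_integral N u"
    by (simp add: u_def[abs_def])
  have u_zero: "u Xs = 0" if "\<exists>i<N. finite (Xs i) \<and> 2 \<le> card (Xs i)" for Xs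
  proof -
    have "v (Xs(N := Y)) = 0" for Y
      using that by (intro zero) auto
    then show ?thesis by (simp add: u_def rfs_zero)
  qed
  have u_cfg: "u (cfgS S x) = v (cfgS S x) + (\<integral>\<^sup>+y. v (cfgS (insert N S) (x(N := y))) \<partial>lborel)"
    if S: "S \<subseteq> {..<N}" and x: "x \<in> space (PiM S (\<lambda>_. lborel::'a measure))" for S x
  proof -
    have NS: "N \<notin> S" using S by auto
    have "u (cfgS S x) = v ((cfgS S x)(N := {})) + (\<integral>\<^sup>+y. v ((cfgS S x)(N := {y})) \<partial>lborel)"
      unfolding u_def
    proof (rule rfs_small)
      show "v ((cfgS S x)(N := Y)) = 0" if "finite Y" "2 \<le> card Y" for Y
        using that by (intro zero) auto
      have m: "(\<lambda>x. v (cfgS (insert N S) x)) \<in> borel_measurable (PiM (insert N S) (\<lambda>_. lborel::'a measure))"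
        by (rule meas) (use S in auto)
      have "(\<lambda>y. v (cfgS (insert N S) (x(N := y)))) \<in> borel_measurable lborel"
        using measurable_comp[OF measurable_component_update[OF x NS] m] by (simp add: comp_def)
      then show "(\<lambda>y. v ((cfgS S x)(N := {y}))) \<in> borel_measurable lborel"
        by (simp add: cfgS_upd_single)
    qed
    then show ?thesis by (simp add: cfgS_upd_empty[OF NS] cfgS_upd_single)
  qed
  have inner_meas: "(\<lambda>x. \<integral>\<^sup>+y. v (cfgS (insert N S) (x(N := y))) \<partial>lborel) \<in> borel_measurable (PiM S (\<lambda>_. lborel::'a measure))"
    if S: "S \<subseteq> {..<N}" for S
  proof (rule lborel.borel_measurable_nn_integral)
    have "(\<lambda>(x, y). x(N := y)) \<in> measurable (PiM S (\<lambda>_. lborel::'a measure) \<Otimes>\<^sub>M lborel) (PiM (insert N S) (\<lambda>_. lborel))"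
      using measurable_add_dim[of N S "\<lambda>_. lborel::'a measure"] by simp
    from measurable_comp[OF this measI[OF S]]
    show "(\<lambda>(x, y). v (cfgS (insert N S) (x(N := y)))) \<in> borel_measurable (PiM S (\<lambda>_. lborel) \<Otimes>\<^sub>M lborel)"
      by (auto simp: comp_def case_prod_beta')
  qed
  have u_meas: "(\<lambda>x. u (cfgS S x)) \<in> borel_measurable (PiM S (\<lambda>_. lborel))" if S: "S \<subseteq> {..<N}" for S
  proof -
    have "(\<lambda>x. v (cfgS S x) + (\<integral>\<^sup>+y. v (cfgS (insert N S) (x(N := y))) \<partial>lborel)) \<in> borel_measurable (PiM S (\<lambda>_. lborel::'a measure))"
      using measS[OF S] inner_meas[OF S] by (rule borel_measurable_add)
    then show ?thesis
      by (rule measurable_cong[THEN iffD1, rotated]) (use u_cfg[OF S] in simp)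
  qed
  have IH: "multi_nn_integral N u = (\<Sum>S\<in>Pow {..<N}. \<integral>\<^sup>+x. u (cfgS S x) \<partial>PiM S (\<lambda>_. lborel))"
    by (rule Suc.IH) (use u_zero u_meas in auto)
  have step: "(\<integral>\<^sup>+x. u (cfgS S x) \<partial>PiM S (\<lambda>_. lborel)) =
      (\<integral>\<^sup>+x. v (cfgS S x) \<partial>PiM S (\<lambda>_. lborel)) + (\<integral>\<^sup>+x. v (cfgS (insert N S) x) \<partial>PiM (insert N S) (\<lambda>_. lborel::'a measure))"
    if S: "S \<subseteq> {..<N}" for S
  proof -
    have fin: "finite S" using S finite_subset by blast
    have NS: "N \<notin> S" using S by auto
    have "(\<integral>\<^sup>+x. u (cfgS S x) \<partial>PiM S (\<lambda>_. lborel)) =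
        (\<integral>\<^sup>+x. v (cfgS S x) + (\<integral>\<^sup>+y. v (cfgS (insert N S) (x(N := y))) \<partial>lborel) \<partial>PiM S (\<lambda>_. lborel::'a measure))"
      by (rule nn_integral_cong) (use u_cfg[OF S] in simp)
    also have "\<dots> = (\<integral>\<^sup>+x. v (cfgS S x) \<partial>PiM S (\<lambda>_. lborel)) +
        (\<integral>\<^sup>+x. (\<integral>\<^sup>+y. v (cfgS (insert N S) (x(N := y))) \<partial>lborel) \<partial>PiM S (\<lambda>_. lborel::'a measure))"
      by (rule nn_integral_add) (use measS[OF S] inner_meas[OF S] in auto)
    also have "(\<integral>\<^sup>+x. (\<integral>\<^sup>+y. v (cfgS (insert N S) (x(N := y))) \<partial>lborel) \<partial>PiM S (\<lambda>_. lborel::'a measure))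
        = (\<integral>\<^sup>+x. v (cfgS (insert N S) x) \<partial>PiM (insert N S) (\<lambda>_. lborel::'a measure))"
      by (rule product_sigma_finite.product_nn_integral_insert[OF ps_lborel, symmetric])
         (use fin NS measI[OF S] in auto)
    finally show ?thesis .
  qed
  have pow: "Pow {..<Suc N} = Pow {..<N} \<union> insert N ` Pow {..<N}"
    by (simp add: lessThan_Suc Pow_insert)
  have disj: "Pow {..<N} \<inter> insert N ` Pow {..<N} = {}" by auto
  have injI: "inj_on (insert N) (Pow {..<N})"
    by (rule inj_onI) (metis Pow_iff insert_ident lessThan_iff order_less_irrefl subsetD)
  have "multi_nn_integral (Suc N) v = (\<Sum>S\<in>Pow {..<N}. \<integral>\<^sup>+x. u (cfgS S x) \<partial>PiM S (\<lambda>_. lborel))"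
    using multi_eq IH by simp
  also have "\<dots> = (\<Sum>S\<in>Pow {..<N}. \<integral>\<^sup>+x. v (cfgS S x) \<partial>PiM S (\<lambda>_. lborel)) +
      (\<Sum>S\<in>Pow {..<N}. \<integral>\<^sup>+x. v (cfgS (insert N S) x) \<partial>PiM (insert N S) (\<lambda>_. lborel::'a measure))"
    by (simp add: step sum.distrib)
  also have "(\<Sum>S\<in>Pow {..<N}. \<integral>\<^sup>+x. v (cfgS (insert N S) x) \<partial>PiM (insert N S) (\<lambda>_. lborel::'a measure))
      = (\<Sum>S\<in>insert N ` Pow {..<N}. \<integral>\<^sup>+x. v (cfgS S x) \<partial>PiM S (\<lambda>_. lborel::'a measure))"
    by (rule sum.reindex[OF injI, symmetric, unfolded comp_def])
  also have "(\<Sum>S\<in>Pow {..<N}. \<integral>\<^sup>+x. v (cfgS S x) \<partial>PiM S (\<lambda>_. lborel)) + \<dots>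
      = (\<Sum>S\<in>Pow {..<Suc N}. \<integral>\<^sup>+x. v (cfgS S x) \<partial>PiM S (\<lambda>_. lborel))"
    unfolding pow by (rule sum.union_disjoint[symmetric]) (use disj in auto)
  finally show ?case .
qed

lemma PiM_reindex:
  assumes bij: "bij_betw t J I" and fin: "finite I"
  shows "distr (PiM I (\<lambda>_. lborel::'a::euclidean_space measure)) (PiM J (\<lambda>_. lborel)) (\<lambda>x. \<lambda>j\<in>J. x (t j))
      = PiM J (\<lambda>_. lborel)"
proof -
  have finJ: "finite J" using bij fin bij_betw_finite by blast
  have tJ: "t j \<in> I" if "j \<in> J" for j using bij that by (auto simp: bij_betw_def)
  have meas: "(\<lambda>x. \<lambda>j\<in>J. x (t j)) \<in> measurable (PiM I (\<lambda>_. lborel::'a measure)) (PiM J (\<lambda>_. lborel))"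
    by (rule measurable_restrict) (use tJ in \<open>auto intro: measurable_component_singleton\<close>)
  show ?thesis
  proof (rule product_sigma_finite.PiM_eqI[OF ps_lborel finJ])
    show "sets (distr (PiM I (\<lambda>_. lborel::'a measure)) (PiM J (\<lambda>_. lborel)) (\<lambda>x. \<lambda>j\<in>J. x (t j))) = sets (PiM J (\<lambda>_. lborel))"
      by simp
    fix A assume A: "\<And>j. j \<in> J \<Longrightarrow> A j \<in> sets (lborel::'a measure)"
    let ?s = "inv_into J t"
    have sI: "?s i \<in> J" if "i \<in> I" for i using bij that by (metis bij_betw_def inv_into_into)
    have ts: "t (?s i) = i" if "i \<in> I" for i using bij that by (metis bij_betw_def f_inv_into_f)
    have st: "?s (t j) = j" if "j \<in> J" for j using bij that by (metis bij_betw_def inv_into_f_f)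
    have pre: "(\<lambda>x. \<lambda>j\<in>J. x (t j)) -` (Pi\<^sub>E J A) \<inter> space (PiM I (\<lambda>_. lborel::'a measure)) = Pi\<^sub>E I (\<lambda>i. A (?s i))"
    proof (intro set_eqI iffI)
      fix x assume "x \<in> (\<lambda>x. \<lambda>j\<in>J. x (t j)) -` (Pi\<^sub>E J A) \<inter> space (PiM I (\<lambda>_. lborel::'a measure))"
      then have x0: "(\<lambda>j\<in>J. x (t j)) \<in> Pi\<^sub>E J A" "x \<in> extensional I"
        by (auto simp: space_PiM PiE_def)
      have x: "\<And>j. j \<in> J \<Longrightarrow> x (t j) \<in> A j"
      proof -
        fix j assume "j \<in> J"
        then show "x (t j) \<in> A j" using x0(1) PiE_mem[OF x0(1)] by (metis restrict_apply')
      qed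
      show "x \<in> Pi\<^sub>E I (\<lambda>i. A (?s i))"
      proof (unfold PiE_iff, intro conjI ballI)
        fix i assume i: "i \<in> I"
        show "x i \<in> A (?s i)" using x[OF sI[OF i]] ts[OF i] by simp
      qed (rule x0(2))
    next
      fix x assume x: "x \<in> Pi\<^sub>E I (\<lambda>i. A (?s i))"
      then have "x (t j) \<in> A j" if "j \<in> J" for j using PiE_mem[OF x tJ[OF that]] st[OF that] by simp
      then show "x \<in> (\<lambda>x. \<lambda>j\<in>J. x (t j)) -` (Pi\<^sub>E J A) \<inter> space (PiM I (\<lambda>_. lborel::'a measure))"
        using x by (auto simp: space_PiM PiE_def)
    qed
    have "emeasure (distr (PiM I (\<lambda>_. lborel::'a measure)) (PiM J (\<lambda>_. lborel)) (\<lambda>x. \<lambda>j\<in>J. x (t j))) (Pi\<^sub>E J A)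
        = emeasure (PiM I (\<lambda>_. lborel::'a measure)) (Pi\<^sub>E I (\<lambda>i. A (?s i)))"
      using A by (subst emeasure_distr[OF meas]) (auto simp: pre intro!: sets_PiM_I_finite finJ)
    also have "\<dots> = (\<Prod>i\<in>I. emeasure lborel (A (?s i)))"
      using A sI by (intro product_sigma_finite.emeasure_PiM[OF ps_lborel fin]) auto
    also have "\<dots> = (\<Prod>j\<in>J. emeasure lborel (A j))"
      using prod.reindex_bij_betw[OF bij, of "\<lambda>i. emeasure lborel (A (?s i))"] st by simp
    finally show "emeasure (distr (PiM I (\<lambda>_. lborel::'a measure)) (PiM J (\<lambda>_. lborel)) (\<lambda>x. \<lambda>j\<in>J. x (t j))) (Pi\<^sub>E J A)
        = (\<Prod>j\<in>J. emeasure lborel (A j))" .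
  qed
qed

lemma nn_integral_reindex:
  assumes bij: "bij_betw t J I" and fin: "finite I"
    and h: "h \<in> borel_measurable (PiM J (\<lambda>_. lborel::'a::euclidean_space measure))"
  shows "(\<integral>\<^sup>+y. h y \<partial>PiM J (\<lambda>_. lborel)) = (\<integral>\<^sup>+x. h (\<lambda>j\<in>J. x (t j)) \<partial>PiM I (\<lambda>_. lborel::'a measure))"
proof -
  have tJ: "t j \<in> I" if "j \<in> J" for j using bij that by (auto simp: bij_betw_def)
  have meas: "(\<lambda>x. \<lambda>j\<in>J. x (t j)) \<in> measurable (PiM I (\<lambda>_. lborel::'a measure)) (PiM J (\<lambda>_. lborel))"
    by (rule measurable_restrict) (use tJ in \<open>auto intro: measurable_component_singleton\<close>)
  have "(\<integral>\<^sup>+y. h y \<partial>PiM J (\<lambda>_. lborel)) = (\<integral>\<^sup>+y. h y \<partial>distr (PiM I (\<lambda>_. lborel::'a measure)) (PiM J (\<lambda>_. lborel)) (\<lambda>x. \<lambda>j\<in>J. x (t j)))"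
    by (subst PiM_reindex[OF bij fin]) (rule refl)
  also have "\<dots> = (\<integral>\<^sup>+x. h (\<lambda>j\<in>J. x (t j)) \<partial>PiM I (\<lambda>_. lborel::'a measure))"
    by (rule nn_integral_distr[OF meas]) (use h in simp)
  finally show ?thesis .
qed

lemma card_inj_funcset:
  assumes "finite S" "finite T" "card S \<le> card T"
  shows "card {f \<in> S \<rightarrow>\<^sub>E T. inj_on f S} * fact (card T - card S) = fact (card T)"
  using assms
proof (induction S arbitrary: T rule: finite_induct)
  case empty
  then show ?case by (simp add: PiE_empty_domain Collect_conv_if)
next
  case (insert x S)
  let ?P = "{(y, g). y \<in> T \<and> g \<in> S \<rightarrow>\<^sub>E (T - {y}) \<and> inj_on g S}"
  have eq: "{f \<in> insert x S \<rightarrow>\<^sub>E T. inj_on f (insert x S)} = (\<lambda>(y, g). g(x:=y)) ` ?P"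
    using extensional_funcset_extend_domain_inj_on_eq[OF insert(2), of T] by simp
  have "card {f \<in> insert x S \<rightarrow>\<^sub>E T. inj_on f (insert x S)} = card ?P"
    unfolding eq by (rule card_image[OF extensional_funcset_extend_domain_inj_onI[OF insert(2)]])
  also have "?P = (SIGMA y:T. {g \<in> S \<rightarrow>\<^sub>E (T - {y}). inj_on g S})" unfolding Sigma_def by blast
  also have "card \<dots> = (\<Sum>y\<in>T. card {g \<in> S \<rightarrow>\<^sub>E (T - {y}). inj_on g S})"
  proof (rule card_SigmaI)
    show "finite T" by (rule insert.prems(1))
    show "\<forall>y\<in>T. finite {g \<in> S \<rightarrow>\<^sub>E (T - {y}). inj_on g S}"
    proof
      fix y
      have "finite (S \<rightarrow>\<^sub>E (T - {y}))" using insert.prems(1) insert.hyps(1) by (simp add: finite_PiE)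
      then show "finite {g \<in> S \<rightarrow>\<^sub>E (T - {y}). inj_on g S}" by simp
    qed
  qed
  finally have c: "card {f \<in> insert x S \<rightarrow>\<^sub>E T. inj_on f (insert x S)} = (\<Sum>y\<in>T. card {g \<in> S \<rightarrow>\<^sub>E (T - {y}). inj_on g S})" .
  have cT: "card T \<ge> 1" "card S < card T" using insert.prems(2) insert.hyps by simp_all
  have IH: "card {g \<in> S \<rightarrow>\<^sub>E (T - {y}). inj_on g S} * fact (card T - 1 - card S) = fact (card T - 1)"
    if "y \<in> T" for y
  proof -
    have "card (T - {y}) = card T - 1" using that insert.prems(1) by (simp add: card_Diff_singleton)
    moreover have "finite (T - {y})" using insert.prems(1) by simp
    moreover have "card S \<le> card (T - {y})" using cT calculation(1) by linarith
    ultimately show ?thesis using insert.IH[of "T - {y}"] by simp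
  qed
  have "card {f \<in> insert x S \<rightarrow>\<^sub>E T. inj_on f (insert x S)} * fact (card T - card (insert x S))
      = (\<Sum>y\<in>T. card {g \<in> S \<rightarrow>\<^sub>E (T - {y}). inj_on g S} * fact (card T - 1 - card S))"
    unfolding c using insert.hyps by (simp add: sum_distrib_right)
  also have "\<dots> = (\<Sum>y\<in>T. fact (card T - 1))" by (rule sum.cong[OF refl]) (rule IH)
  also have "\<dots> = card T * fact (card T - 1)" by simp
  also have "\<dots> = fact (card T)" using cT by (cases "card T") simp_all
  finally show ?case .
qed

lemma card_bij_funcset:
  assumes "finite S" "finite T" "card S = card T"
  shows "card {f \<in> S \<rightarrow>\<^sub>E T. inj_on f S} = fact (card T)"
  using card_inj_funcset[OF assms(1,2)] assms(3) by simp

lemma count_Inj_image: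
  assumes S: "S \<subseteq> {..<N}" "card S = n"
  shows "card {\<iota> \<in> Inj N n. \<iota> ` {..<n} = S} = fact n"
proof -
  have finS: "finite S" using S finite_subset by blast
  have "{\<iota> \<in> Inj N n. \<iota> ` {..<n} = S} = {f \<in> {..<n} \<rightarrow>\<^sub>E S. inj_on f {..<n}}"
  proof (intro set_eqI iffI)
    fix \<iota> assume a: "\<iota> \<in> {\<iota> \<in> Inj N n. \<iota> ` {..<n} = S}"
    then have "\<iota> \<in> {..<n} \<rightarrow>\<^sub>E {..<N}" "inj_on \<iota> {..<n}" "\<iota> ` {..<n} = S" by (simp_all add: Inj_def)
    then show "\<iota> \<in> {f \<in> {..<n} \<rightarrow>\<^sub>E S. inj_on f {..<n}}" by (auto simp: PiE_iff)
  next
    fix f assume f: "f \<in> {f \<in> {..<n} \<rightarrow>\<^sub>E S. inj_on f {..<n}}"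
    then have f1: "f \<in> {..<n} \<rightarrow>\<^sub>E S" "inj_on f {..<n}" by simp_all
    then have "f ` {..<n} \<subseteq> S" "card (f ` {..<n}) = card S" using S by (auto simp: card_image PiE_iff)
    then have "f ` {..<n} = S" using finS by (simp add: card_subset_eq)
    moreover have "f \<in> {..<n} \<rightarrow>\<^sub>E {..<N}" using f1(1) S(1) by (auto simp: PiE_iff)
    ultimately show "f \<in> {\<iota> \<in> Inj N n. \<iota> ` {..<n} = S}" using f1 by (simp add: Inj_def)
  qed
  then show ?thesis using card_bij_funcset[of "{..<n}" S] finS S by simp
qed

lemma cfgS_restrict_cfgI:
  "cfgS (\<iota> ` {..<n}) (\<lambda>j\<in>\<iota> ` {..<n}. xs (inv_into {..<n} \<iota> j)) = cfgI \<iota> n xs"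
  by (rule ext) (simp add: cfgS_def cfgI_def)

lemma multi_level:
  fixes v :: "(nat \<Rightarrow> 'a::euclidean_space set) \<Rightarrow> ennreal"
  assumes zero: "\<And>Xs. (\<exists>i<N. finite (Xs i) \<and> 2 \<le> card (Xs i)) \<Longrightarrow> v Xs = 0"
    and meas: "\<And>S. S \<subseteq> {..<N} \<Longrightarrow> (\<lambda>x. v (cfgS S x)) \<in> borel_measurable (PiM S (\<lambda>_. lborel))"
  shows "multi_nn_integral N v = (\<Sum>n\<in>{..N}. ennreal (1 / fact n) *
            (\<Sum>\<iota>\<in>Inj N n. \<integral>\<^sup>+xs. v (cfgI \<iota> n xs) \<partial>PiM {..<n} (\<lambda>_. lborel)))"
proof -
  define R where "R S = (\<integral>\<^sup>+x. v (cfgS S x) \<partial>PiM S (\<lambda>_. lborel::'a measure))" for S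
  define Q where "Q n \<iota> = (\<integral>\<^sup>+xs. v (cfgI \<iota> n xs) \<partial>PiM {..<n} (\<lambda>_. lborel::'a measure))" for n \<iota>
  have QR: "Q n \<iota> = R (\<iota> ` {..<n})" if \<iota>: "\<iota> \<in> Inj N n" for n \<iota>
  proof -
    let ?S = "\<iota> ` {..<n}"
    have S: "?S \<subseteq> {..<N}" using \<iota> by (auto simp: Inj_def PiE_iff)
    have bij: "bij_betw \<iota> {..<n} ?S" using \<iota> by (simp add: Inj_def bij_betw_def)
    have bij': "bij_betw (inv_into {..<n} \<iota>) ?S {..<n}" by (rule bij_betw_inv_into[OF bij])
    have "R ?S = (\<integral>\<^sup>+xs. v (cfgS ?S (\<lambda>j\<in>?S. xs (inv_into {..<n} \<iota> j))) \<partial>PiM {..<n} (\<lambda>_. lborel::'a measure))"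
      unfolding R_def by (rule nn_integral_reindex[OF bij' finite_lessThan meas[OF S]])
    then show ?thesis by (simp add: Q_def cfgS_restrict_cfgI)
  qed
  have lvl: "ennreal (1 / fact n) * (\<Sum>\<iota>\<in>Inj N n. Q n \<iota>) = (\<Sum>S\<in>{S\<in>Pow {..<N}. card S = n}. R S)" for n
  proof -
    have img: "(\<lambda>\<iota>. \<iota> ` {..<n}) ` Inj N n \<subseteq> {S\<in>Pow {..<N}. card S = n}"
      by (auto simp: Inj_def PiE_iff card_image)
    have "(\<Sum>\<iota>\<in>Inj N n. Q n \<iota>) = (\<Sum>S\<in>{S\<in>Pow {..<N}. card S = n}. \<Sum>\<iota>\<in>{\<iota>. \<iota> \<in> Inj N n \<and> \<iota> ` {..<n} = S}. Q n \<iota>)"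
      by (rule sum.group[symmetric]) (use img in auto)
    also have "\<dots> = (\<Sum>S\<in>{S\<in>Pow {..<N}. card S = n}. of_nat (fact n) * R S)"
    proof (rule sum.cong[OF refl])
      fix S assume S: "S \<in> {S\<in>Pow {..<N}. card S = n}"
      have "(\<Sum>\<iota>\<in>{\<iota>. \<iota> \<in> Inj N n \<and> \<iota> ` {..<n} = S}. Q n \<iota>) = (\<Sum>\<iota>\<in>{\<iota>. \<iota> \<in> Inj N n \<and> \<iota> ` {..<n} = S}. R S)"
        by (rule sum.cong[OF refl]) (simp add: QR)
      also have "\<dots> = of_nat (card {\<iota> \<in> Inj N n. \<iota> ` {..<n} = S}) * R S" by simp
      also have "card {\<iota> \<in> Inj N n. \<iota> ` {..<n} = S} = fact n"
        by (rule count_Inj_image) (use S in auto)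
      finally show "(\<Sum>\<iota>\<in>{\<iota>. \<iota> \<in> Inj N n \<and> \<iota> ` {..<n} = S}. Q n \<iota>) = of_nat (fact n) * R S" .
    qed
    also have "\<dots> = of_nat (fact n) * (\<Sum>S\<in>{S\<in>Pow {..<N}. card S = n}. R S)"
      by (simp add: sum_distrib_left)
    finally have eq: "(\<Sum>\<iota>\<in>Inj N n. Q n \<iota>) = of_nat (fact n) * (\<Sum>S\<in>{S\<in>Pow {..<N}. card S = n}. R S)" .
    have one: "ennreal (1 / fact n) * of_nat (fact n) = 1"
    proof -
      have "ennreal (1 / fact n) * of_nat (fact n) = ennreal (1 / fact n) * ennreal (fact n)"
        by (simp add: ennreal_of_nat_eq_real_of_nat)
      also have "\<dots> = ennreal (1 / fact n * fact n)" by (rule ennreal_mult[symmetric]) auto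
      also have "\<dots> = 1" by simp
      finally show ?thesis .
    qed
    show ?thesis unfolding eq mult.assoc[symmetric] one by simp
  qed
  have "multi_nn_integral N v = (\<Sum>S\<in>Pow {..<N}. R S)"
    unfolding R_def by (rule multi_cfg[OF zero meas]) auto
  also have "\<dots> = (\<Sum>n\<in>{..N}. \<Sum>S\<in>{S. S \<in> Pow {..<N} \<and> card S = n}. R S)"
  proof (rule sum.group[symmetric])
    show "card ` Pow {..<N} \<subseteq> {..N}"
      using card_mono[of "{..<N}"] by fastforce
  qed auto
  also have "\<dots> = (\<Sum>n\<in>{..N}. ennreal (1 / fact n) * (\<Sum>\<iota>\<in>Inj N n. Q n \<iota>))"
    by (simp add: lvl)
  finally show ?thesis by (simp add: Q_def)
qed

lemma DT_sum:
  fixes c :: "nat \<Rightarrow> 'a set \<Rightarrow> real"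
  assumes inj: "inj_on xs {..<n}"
    and zero: "\<And>i Y. i < N \<Longrightarrow> finite Y \<Longrightarrow> 2 \<le> card Y \<Longrightarrow> c i Y = 0"
  shows "(\<Sum>Ys\<in>disjoint_tuples N (xs ` {..<n}). \<Prod>i<N. c i (Ys i)) = (\<Sum>\<iota>\<in>Inj N n. \<Prod>i<N. c i (cfgI \<iota> n xs i))"
proof -
  define Y where "Y \<iota> = (\<lambda>i. if i < N then xs ` {k\<in>{..<n}. \<iota> k = i} else {})" for \<iota> :: "nat \<Rightarrow> nat"
  let ?P = "{..<n} \<rightarrow>\<^sub>E {..<N}"
  let ?D = "disjoint_tuples N (xs ` {..<n})"
  have Y_in: "Y \<iota> \<in> ?D" if \<iota>: "\<iota> \<in> ?P" for \<iota>
  proof -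
    have "Y \<iota> i \<inter> Y \<iota> j = {}" if "i < N" "j < N" "i \<noteq> j" for i j
      using that inj by (auto simp: Y_def inj_on_def)
    moreover have "(\<Union>i<N. Y \<iota> i) = xs ` {..<n}"
    proof
      show "(\<Union>i<N. Y \<iota> i) \<subseteq> xs ` {..<n}" by (auto simp: Y_def)
      show "xs ` {..<n} \<subseteq> (\<Union>i<N. Y \<iota> i)"
      proof
        fix y assume "y \<in> xs ` {..<n}"
        then obtain k where k: "k < n" "y = xs k" by auto
        then have "\<iota> k < N" using \<iota> by (auto simp: PiE_iff)
        then show "y \<in> (\<Union>i<N. Y \<iota> i)" using k by (auto simp: Y_def)
      qed
    qed
    moreover have "\<forall>i\<ge>N. Y \<iota> i = {}" by (simp add: Y_def)
    ultimately show ?thesis by (simp add: disjoint_tuples_def)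
  qed
  have Y_inj: "inj_on Y ?P"
  proof (rule inj_onI)
    fix \<iota> \<iota>' assume \<iota>: "\<iota> \<in> ?P" and \<iota>': "\<iota>' \<in> ?P" and eq: "Y \<iota> = Y \<iota>'"
    show "\<iota> = \<iota>'"
    proof (rule extensionalityI[of _ "{..<n}"])
      show "\<iota> \<in> extensional {..<n}" "\<iota>' \<in> extensional {..<n}" using \<iota> \<iota>' by (auto simp: PiE_def)
      fix k assume k: "k \<in> {..<n}"
      have lt: "\<iota> k < N" using \<iota> k by (auto simp: PiE_iff)
      have "xs k \<in> Y \<iota> (\<iota> k)" using k lt by (auto simp: Y_def)
      then have "xs k \<in> Y \<iota>' (\<iota> k)" using eq by simp
      then obtain k' where "k' < n" "\<iota>' k' = \<iota> k" "xs k = xs k'" using lt by (auto simp: Y_def)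
      moreover then have "k' = k" using inj k by (auto simp: inj_on_def)
      ultimately show "\<iota> k = \<iota>' k" by simp
    qed
  qed
  have Y_surj: "?D \<subseteq> Y ` ?P"
  proof
    fix Ys assume Ys: "Ys \<in> ?D"
    have disj: "\<And>i j. i < N \<Longrightarrow> j < N \<Longrightarrow> i \<noteq> j \<Longrightarrow> Ys i \<inter> Ys j = {}"
      and un: "(\<Union>i<N. Ys i) = xs ` {..<n}" and big: "\<And>i. N \<le> i \<Longrightarrow> Ys i = {}"
      using Ys by (auto simp: disjoint_tuples_def)
    have ex: "\<exists>i<N. xs k \<in> Ys i" if "k < n" for k
      using un that by blast
    have uq: "i = j" if "i < N" "j < N" "y \<in> Ys i" "y \<in> Ys j" for i j y
      using disj[of i j] that by blast
    define \<iota> where "\<iota> k = (if k < n then (THE i. i < N \<and> xs k \<in> Ys i) else undefined)" for k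
    have \<iota>k: "\<iota> k < N \<and> xs k \<in> Ys (\<iota> k)" if kn: "k < n" for k
    proof -
      obtain i where i: "i < N" "xs k \<in> Ys i" using ex[OF kn] by blast
      have "(THE i. i < N \<and> xs k \<in> Ys i) = i" using i uq by blast
      then show ?thesis using i kn by (simp add: \<iota>_def)
    qed
    have \<iota>P: "\<iota> \<in> ?P" using \<iota>k by (auto simp: PiE_iff \<iota>_def extensional_def)
    have "Y \<iota> = Ys"
    proof (rule ext)
      fix i
      show "Y \<iota> i = Ys i"
      proof (cases "i < N")
        case True
        have "xs ` {k\<in>{..<n}. \<iota> k = i} = Ys i"
        proof
          show "xs ` {k\<in>{..<n}. \<iota> k = i} \<subseteq> Ys i" using \<iota>k by auto
          show "Ys i \<subseteq> xs ` {k\<in>{..<n}. \<iota> k = i}"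
          proof
            fix y assume y: "y \<in> Ys i"
            then have "y \<in> xs ` {..<n}" using un True by blast
            then obtain k where k: "k < n" "y = xs k" by auto
            then have "\<iota> k = i" using \<iota>k[OF k(1)] uq[of "\<iota> k" i y] y True by auto
            then show "y \<in> xs ` {k\<in>{..<n}. \<iota> k = i}" using k by auto
          qed
        qed
        then show ?thesis using True by (simp add: Y_def)
      next
        case False
        then show ?thesis using big by (simp add: Y_def)
      qed
    qed
    then show "Ys \<in> Y ` ?P" using \<iota>P by blast
  qed
  have bij: "bij_betw Y ?P ?D"
    using Y_inj Y_in Y_surj by (auto simp: bij_betw_def)
  have "(\<Sum>Ys\<in>?D. \<Prod>i<N. c i (Ys i)) = (\<Sum>\<iota>\<in>?P. \<Prod>i<N. c i (Y \<iota> i))"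
    by (rule sum.reindex_bij_betw[OF bij, symmetric])
  also have "\<dots> = (\<Sum>\<iota>\<in>Inj N n. \<Prod>i<N. c i (Y \<iota> i))"
  proof (rule sum.mono_neutral_right)
    show "finite ?P" by (simp add: finite_PiE)
    show "Inj N n \<subseteq> ?P" by (auto simp: Inj_def)
    show "\<forall>\<iota>\<in>?P - Inj N n. (\<Prod>i<N. c i (Y \<iota> i)) = 0"
    proof
      fix \<iota> assume "\<iota> \<in> ?P - Inj N n"
      then have \<iota>: "\<iota> \<in> ?P" "\<not> inj_on \<iota> {..<n}" by (auto simp: Inj_def)
      then obtain k k' where kk: "k < n" "k' < n" "k \<noteq> k'" "\<iota> k = \<iota> k'" by (auto simp: inj_on_def)
      let ?i = "\<iota> k"
      have lt: "?i < N" using \<iota>(1) kk by (auto simp: PiE_iff)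
      have sub: "{xs k, xs k'} \<subseteq> Y \<iota> ?i" using kk lt by (auto simp: Y_def)
      have "xs k \<noteq> xs k'" using inj kk by (auto simp: inj_on_def)
      then have "card {xs k, xs k'} = 2" by simp
      moreover have fin: "finite (Y \<iota> ?i)" by (simp add: Y_def)
      ultimately have "2 \<le> card (Y \<iota> ?i)" using card_mono[OF fin sub] by simp
      then have "c ?i (Y \<iota> ?i) = 0" using zero[OF lt fin] by simp
      then show "(\<Prod>i<N. c i (Y \<iota> i)) = 0" using lt by (intro prod_zero) auto
    qed
  qed
  also have "\<dots> = (\<Sum>\<iota>\<in>Inj N n. \<Prod>i<N. c i (cfgI \<iota> n xs i))"
  proof (rule sum.cong[OF refl], rule prod.cong[OF refl])
    fix \<iota> i assume \<iota>: "\<iota> \<in> Inj N n" and i: "i \<in> {..<N}"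
    have inj\<iota>: "inj_on \<iota> {..<n}" using \<iota> by (simp add: Inj_def)
    have "xs ` {k\<in>{..<n}. \<iota> k = i} = (if i \<in> \<iota> ` {..<n} then {xs (inv_into {..<n} \<iota> i)} else {})"
    proof (cases "i \<in> \<iota> ` {..<n}")
      case True
      have "{k\<in>{..<n}. \<iota> k = i} = {inv_into {..<n} \<iota> i}"
        using True inj\<iota> by (auto simp: inv_into_f_f inv_into_into f_inv_into_f inj_on_def)
      then show ?thesis using True by simp
    qed auto
    then show "c i (Y \<iota> i) = c i (cfgI \<iota> n xs i)" using i by (simp add: Y_def cfgI_def)
  qed
  finally show ?thesis .
qed

lemma Inj_image: "\<iota> \<in> Inj N n \<Longrightarrow> \<iota> ` {..<n} \<subseteq> {..<N}"
  by (auto simp: Inj_def PiE_iff)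

lemma Inj_card_image: "\<iota> \<in> Inj N n \<Longrightarrow> card (\<iota> ` {..<n}) = n"
  by (auto simp: Inj_def card_image)

lemma fiber_card:
  assumes \<iota>: "\<iota> \<in> Inj N n" and \<tau>: "\<tau> \<in> Inj N n"
  shows "card {\<pi>. \<pi> permutes {..<N} \<and> restrict (\<pi> \<circ> \<iota>) {..<n} = \<tau>} = fact (N - n)"
proof -
  let ?F = "{\<pi>. \<pi> permutes {..<N} \<and> restrict (\<pi> \<circ> \<iota>) {..<n} = \<tau>}"
  define A where "A = {..<N} - \<iota> ` {..<n}"
  define B where "B = {..<N} - \<tau> ` {..<n}"
  have inj\<iota>: "inj_on \<iota> {..<n}" and inj\<tau>: "inj_on \<tau> {..<n}" using \<iota> \<tau> by (simp_all add: Inj_def)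
  have \<iota>N: "\<iota> k < N" if "k < n" for k using \<iota> that by (auto simp: Inj_def PiE_iff)
  have \<tau>N: "\<tau> k < N" if "k < n" for k using \<tau> that by (auto simp: Inj_def PiE_iff)
  have \<tau>ext: "\<tau> \<in> extensional {..<n}" using \<tau> by (auto simp: Inj_def PiE_def)
  have cardA: "card A = N - n" unfolding A_def
    using Inj_image[OF \<iota>] Inj_card_image[OF \<iota>] by (simp add: card_Diff_subset)
  have cardB: "card B = N - n" unfolding B_def
    using Inj_image[OF \<tau>] Inj_card_image[OF \<tau>] by (simp add: card_Diff_subset)
  have finA: "finite A" "finite B" by (simp_all add: A_def B_def)
  have fib: "\<pi> (\<iota> k) = \<tau> k" if "\<pi> \<in> ?F" "k < n" for \<pi> k
  proof -
    have "restrict (\<pi> \<circ> \<iota>) {..<n} k = \<tau> k" using that by simp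
    then show ?thesis using that(2) by simp
  qed
  have "bij_betw (\<lambda>\<pi>. restrict \<pi> A) ?F {h \<in> A \<rightarrow>\<^sub>E B. inj_on h A}"
  proof (unfold bij_betw_def, intro conjI)
    show "inj_on (\<lambda>\<pi>. restrict \<pi> A) ?F"
    proof (rule inj_onI)
      fix \<pi> \<pi>' assume p: "\<pi> \<in> ?F" and p': "\<pi>' \<in> ?F" and eq: "restrict \<pi> A = restrict \<pi>' A"
      have pp: "\<pi> permutes {..<N}" "\<pi>' permutes {..<N}" using p p' by auto
      show "\<pi> = \<pi>'"
      proof (rule ext)
        fix x
        consider "x \<in> A" | "x \<in> \<iota> ` {..<n}" | "x \<notin> {..<N}" using A_def by blast
        then show "\<pi> x = \<pi>' x"
        proof cases
          case 1 then show ?thesis using eq by (metis restrict_apply')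
        next
          case 2 then obtain k where "k < n" "x = \<iota> k" by auto
          then show ?thesis using fib[OF p] fib[OF p'] by simp
        next
          case 3 then show ?thesis using pp by (simp add: permutes_not_in)
        qed
      qed
    qed
    show "(\<lambda>\<pi>. restrict \<pi> A) ` ?F = {h \<in> A \<rightarrow>\<^sub>E B. inj_on h A}"
    proof (intro set_eqI iffI)
      fix h assume "h \<in> (\<lambda>\<pi>. restrict \<pi> A) ` ?F"
      then obtain \<pi> where p: "\<pi> \<in> ?F" and h: "h = restrict \<pi> A" by blast
      have pp: "\<pi> permutes {..<N}" using p by simp
      have "\<pi> a \<in> B" if a: "a \<in> A" for a
      proof -
        have "a \<in> {..<N}" using a by (simp add: A_def)
        then have "\<pi> a \<in> {..<N}" using pp by (simp only: permutes_in_image)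
        moreover have "\<pi> a \<notin> \<tau> ` {..<n}"
        proof
          assume "\<pi> a \<in> \<tau> ` {..<n}"
          then obtain k where k: "k < n" "\<pi> a = \<tau> k" by auto
          then have "\<pi> a = \<pi> (\<iota> k)" using fib[OF p k(1)] by simp
          then have "a = \<iota> k" using permutes_inj[OF pp] by (simp add: inj_eq)
          then show False using a k(1) by (simp add: A_def)
        qed
        ultimately show ?thesis by (simp add: B_def)
      qed
      moreover have "inj_on \<pi> A" using permutes_inj[OF pp] by (meson inj_on_subset subset_UNIV)
      ultimately show "h \<in> {h \<in> A \<rightarrow>\<^sub>E B. inj_on h A}" using h by (auto simp: PiE_iff inj_on_def)
    next
      fix h assume h: "h \<in> {h \<in> A \<rightarrow>\<^sub>E B. inj_on h A}"
      have hB: "h ` A \<subseteq> B" and hinj: "inj_on h A" and hext: "h \<in> extensional A"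
        using h by (auto simp: PiE_iff)
      have hAB: "h ` A = B"
        using hB hinj finA cardA cardB by (simp add: card_image card_subset_eq)
      define \<pi> where "\<pi> x = (if x \<in> A then h x else if x \<in> \<iota> ` {..<n} then \<tau> (inv_into {..<n} \<iota> x) else x)" for x
      have \<pi>\<iota>: "\<pi> (\<iota> k) = \<tau> k" if "k < n" for k
        using that inj\<iota> by (simp add: \<pi>_def A_def inv_into_f_f)
      have img: "\<pi> ` {..<N} = {..<N}"
      proof
        show "\<pi> ` {..<N} \<subseteq> {..<N}"
        proof
          fix y assume "y \<in> \<pi> ` {..<N}"
          then obtain x where x: "x < N" "y = \<pi> x" by auto
          show "y \<in> {..<N}"
          proof (cases "x \<in> A")
            case True then show ?thesis using x hB by (auto simp: \<pi>_def B_def)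
          next
            case False
            then have "x \<in> \<iota> ` {..<n}" using x by (simp add: A_def)
            then show ?thesis using x False \<tau>N inv_into_into[of x \<iota> "{..<n}"] by (simp add: \<pi>_def)
          qed
        qed
        show "{..<N} \<subseteq> \<pi> ` {..<N}"
        proof
          fix y assume y: "y \<in> {..<N}"
          show "y \<in> \<pi> ` {..<N}"
          proof (cases "y \<in> B")
            case True
            then obtain a where a: "a \<in> A" "y = h a" using hAB by blast
            then show ?thesis by (auto simp: \<pi>_def A_def image_iff intro!: bexI[of _ a])
          next
            case False
            then obtain k where k: "k < n" "y = \<tau> k" using y by (auto simp: B_def)
            then show ?thesis using \<pi>\<iota>[OF k(1)] \<iota>N[OF k(1)] by (metis image_eqI lessThan_iff)
          qed
        qed
      qed
      have pp: "\<pi> permutes {..<N}"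
      proof (rule bij_imp_permutes)
        show "bij_betw \<pi> {..<N} {..<N}"
          using img eq_card_imp_inj_on[of "{..<N}" \<pi>] by (simp add: bij_betw_def)
        show "\<pi> x = x" if "x \<notin> {..<N}" for x
          using that \<iota>N by (auto simp: \<pi>_def A_def)
      qed
      have "restrict (\<pi> \<circ> \<iota>) {..<n} = \<tau>"
      proof (rule extensionalityI[OF _ \<tau>ext])
        show "restrict (\<pi> \<circ> \<iota>) {..<n} \<in> extensional {..<n}" by simp
        show "restrict (\<pi> \<circ> \<iota>) {..<n} k = \<tau> k" if "k \<in> {..<n}" for k using that \<pi>\<iota> by simp
      qed
      moreover have "restrict \<pi> A = h"
      proof (rule extensionalityI[OF _ hext])
        show "restrict \<pi> A \<in> extensional A" by simp
        show "restrict \<pi> A a = h a" if "a \<in> A" for a using that by (simp add: \<pi>_def)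
      qed
      ultimately show "h \<in> (\<lambda>\<pi>. restrict \<pi> A) ` ?F" using pp by blast
    qed
  qed
  then have "card ?F = card {h \<in> A \<rightarrow>\<^sub>E B. inj_on h A}" by (rule bij_betw_same_card)
  also have "\<dots> = fact (N - n)" using card_bij_funcset[OF finA] cardA cardB by simp
  finally show ?thesis .
qed

lemma R_Inj:
  assumes \<iota>: "\<iota> \<in> Inj N n" and p: "\<pi> permutes {..<N}"
  shows "restrict (\<pi> \<circ> \<iota>) {..<n} \<in> Inj N n"
proof -
  have \<iota>N: "\<iota> k < N" if "k < n" for k using \<iota> that by (auto simp: Inj_def PiE_iff)
  have mem: "(\<pi> \<circ> \<iota>) k \<in> {..<N}" if "k \<in> {..<n}" for k
    using \<iota>N[of k] that permutes_in_image[OF p, of "\<iota> k"] by simp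
  have inj1: "inj_on (\<pi> \<circ> \<iota>) {..<n}"
  proof (rule comp_inj_on)
    show "inj_on \<iota> {..<n}" using \<iota> by (simp add: Inj_def)
    show "inj_on \<pi> (\<iota> ` {..<n})" using permutes_inj[OF p] by (meson inj_on_subset subset_UNIV)
  qed
  have "restrict (\<pi> \<circ> \<iota>) {..<n} \<in> {..<n} \<rightarrow>\<^sub>E {..<N}"
    using mem by (simp only: restrict_PiE_iff) blast
  moreover have "inj_on (restrict (\<pi> \<circ> \<iota>) {..<n}) {..<n}"
    using inj1 inj_on_cong[of "{..<n}" "restrict (\<pi> \<circ> \<iota>) {..<n}" "\<pi> \<circ> \<iota>"] by simp
  ultimately show ?thesis by (simp add: Inj_def)
qed

lemma cfgI_perm:
  assumes p: "\<pi> permutes {..<N}" and \<iota>: "\<iota> \<in> Inj N n"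
  shows "cfgI \<iota> n xs (inv \<pi> j) = cfgI (restrict (\<pi> \<circ> \<iota>) {..<n}) n xs j"
proof -
  let ?R = "restrict (\<pi> \<circ> \<iota>) {..<n}"
  have img: "?R ` {..<n} = \<pi> ` \<iota> ` {..<n}" by auto
  have bij: "bij \<pi>" using p by (rule permutes_bij)
  have inj\<iota>: "inj_on \<iota> {..<n}" using \<iota> by (simp add: Inj_def)
  have injR: "inj_on ?R {..<n}" using R_Inj[OF \<iota> p] by (simp add: Inj_def)
  have pi1: "\<pi> (inv \<pi> x) = x" and pi2: "inv \<pi> (\<pi> x) = x" for x
    using permutes_inverses[OF p] by simp_all
  have iff: "inv \<pi> j \<in> \<iota> ` {..<n} \<longleftrightarrow> j \<in> \<pi> ` \<iota> ` {..<n}"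
  proof
    assume "inv \<pi> j \<in> \<iota> ` {..<n}"
    then show "j \<in> \<pi> ` \<iota> ` {..<n}" using pi1[of j] by (metis image_eqI)
  next
    assume "j \<in> \<pi> ` \<iota> ` {..<n}"
    then obtain y where "y \<in> \<iota> ` {..<n}" "j = \<pi> y" by blast
    then show "inv \<pi> j \<in> \<iota> ` {..<n}" using pi2[of y] by simp
  qed
  show ?thesis
  proof (cases "inv \<pi> j \<in> \<iota> ` {..<n}")
    case True
    then obtain k where k: "k < n" "inv \<pi> j = \<iota> k" by auto
    then have j: "j = \<pi> (\<iota> k)" using pi1[of j] by simp
    have "inv_into {..<n} \<iota> (inv \<pi> j) = k" using k inj\<iota> by (simp add: inv_into_f_f)
    moreover have "?R k = j" using k j by simp
    then have "inv_into {..<n} ?R j = k" using k injR by (metis inv_into_f_f lessThan_iff)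
    ultimately show ?thesis using True iff img by (simp add: cfgI_def)
  next
    case False
    then show ?thesis using iff img by (simp add: cfgI_def)
  qed
qed

lemma perm_sum:
  fixes c :: "nat \<Rightarrow> 'a set \<Rightarrow> real"
  assumes \<iota>: "\<iota> \<in> Inj N n"
  shows "(\<Sum>\<pi> | \<pi> permutes {..<N}. \<Prod>i<N. c (\<pi> i) (cfgI \<iota> n xs i))
       = fact (N - n) * (\<Sum>\<tau>\<in>Inj N n. \<Prod>j<N. c j (cfgI \<tau> n xs j))"
proof -
  let ?R = "\<lambda>\<pi>. restrict (\<pi> \<circ> \<iota>) {..<n}"
  let ?T = "\<lambda>\<tau>. \<Prod>j<N. c j (cfgI \<tau> n xs j)"
  let ?Pm = "{\<pi>. \<pi> permutes {..<N}}"
  have fin: "finite ?Pm" by (simp add: finite_permutations)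
  have trm: "(\<Prod>i<N. c (\<pi> i) (cfgI \<iota> n xs i)) = ?T (?R \<pi>)" if p: "\<pi> permutes {..<N}" for \<pi>
  proof -
    have bij: "bij_betw \<pi> {..<N} {..<N}" using p by (rule permutes_imp_bij)
    have "(\<Prod>i<N. c (\<pi> i) (cfgI \<iota> n xs i)) = (\<Prod>i<N. (\<lambda>j. c j (cfgI \<iota> n xs (inv \<pi> j))) (\<pi> i))"
      using p by (simp add: permutes_inverses(2))
    also have "\<dots> = (\<Prod>j<N. c j (cfgI \<iota> n xs (inv \<pi> j)))"
      by (rule prod.reindex_bij_betw[OF bij])
    also have "\<dots> = ?T (?R \<pi>)" by (simp only: cfgI_perm[OF p \<iota>])
    finally show ?thesis .
  qed
  have "(\<Sum>\<pi>\<in>?Pm. \<Prod>i<N. c (\<pi> i) (cfgI \<iota> n xs i)) = (\<Sum>\<pi>\<in>?Pm. ?T (?R \<pi>))"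
    using trm by simp
  also have "\<dots> = (\<Sum>\<tau>\<in>Inj N n. \<Sum>\<pi>\<in>{\<pi>. \<pi> \<in> ?Pm \<and> ?R \<pi> = \<tau>}. ?T (?R \<pi>))"
    by (rule sum.group[symmetric]) (use fin R_Inj[OF \<iota>] in auto)
  also have "\<dots> = (\<Sum>\<tau>\<in>Inj N n. of_nat (fact (N - n)) * ?T \<tau>)"
  proof (rule sum.cong[OF refl])
    fix \<tau> assume \<tau>: "\<tau> \<in> Inj N n"
    have "(\<Sum>\<pi>\<in>{\<pi>. \<pi> \<in> ?Pm \<and> ?R \<pi> = \<tau>}. ?T (?R \<pi>)) = (\<Sum>\<pi>\<in>{\<pi>. \<pi> \<in> ?Pm \<and> ?R \<pi> = \<tau>}. ?T \<tau>)"
      by (rule sum.cong) auto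
    also have "\<dots> = of_nat (card {\<pi>. \<pi> permutes {..<N} \<and> ?R \<pi> = \<tau>}) * ?T \<tau>" by simp
    also have "card {\<pi>. \<pi> permutes {..<N} \<and> ?R \<pi> = \<tau>} = fact (N - n)" by (rule fiber_card[OF \<iota> \<tau>])
    finally show "(\<Sum>\<pi>\<in>{\<pi>. \<pi> \<in> ?Pm \<and> ?R \<pi> = \<tau>}. ?T (?R \<pi>)) = of_nat (fact (N - n)) * ?T \<tau>" .
  qed
  also have "\<dots> = fact (N - n) * (\<Sum>\<tau>\<in>Inj N n. ?T \<tau>)"
    by (simp add: sum_distrib_left)
  finally show ?thesis by simp
qed

lemma bern_obtain:
  assumes "is_bernoulli c"
  obtains r p where "0 \<le> r" "r \<le> 1" "p \<in> borel_measurable lborel" "\<And>x. 0 \<le> p x"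
    "(\<integral>\<^sup>+ x. ennreal (p x) \<partial>lborel) = 1" "c = bernoulli_density r p"
  using assms unfolding is_bernoulli_def is_state_pdf_def by blast

lemma bern_nonneg: "is_bernoulli c \<Longrightarrow> 0 \<le> c Y"
  by (erule bern_obtain) (auto simp: bernoulli_density_def)

lemma bern_zero: "is_bernoulli c \<Longrightarrow> finite Y \<Longrightarrow> 2 \<le> card Y \<Longrightarrow> c Y = 0"
  by (erule bern_obtain) (simp add: bd_big)

lemma bern_meas_cfgS:
  assumes "is_bernoulli c"
  shows "(\<lambda>x. c (cfgS S x i)) \<in> borel_measurable (PiM S (\<lambda>_. lborel::'a::euclidean_space measure))"
proof -
  obtain r p where rp: "p \<in> borel_measurable lborel" "c = bernoulli_density r p"
    using assms by (rule bern_obtain)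
  show ?thesis
  proof (cases "i \<in> S")
    case True
    have "(\<lambda>x. r * p (x i)) \<in> borel_measurable (PiM S (\<lambda>_. lborel::'a measure))"
      using measurable_comp[OF measurable_component_singleton[OF True] rp(1)] by (simp add: comp_def)
    then show ?thesis using True rp(2) by (simp add: cfgS_def)
  next
    case False
    then show ?thesis by (simp add: cfgS_def)
  qed
qed

lemma bern_meas_cfgI:
  assumes "is_bernoulli c"
  shows "(\<lambda>xs. c (cfgI \<iota> n xs i)) \<in> borel_measurable (PiM {..<n} (\<lambda>_. lborel::'a::euclidean_space measure))"
proof -
  obtain r p where rp: "p \<in> borel_measurable lborel" "c = bernoulli_density r p"
    using assms by (rule bern_obtain)
  show ?thesis
  proof (cases "i \<in> \<iota> ` {..<n}")
    case True
    let ?k = "inv_into {..<n} \<iota> i"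
    have k: "?k \<in> {..<n}" using True by (rule inv_into_into)
    have "(\<lambda>xs. r * p (xs ?k)) \<in> borel_measurable (PiM {..<n} (\<lambda>_. lborel::'a measure))"
      using measurable_comp[OF measurable_component_singleton[OF k] rp(1)] by (simp add: comp_def)
    then show ?thesis using True rp(2) by (simp add: cfgI_def)
  next
    case False
    then show ?thesis by (simp add: cfgI_def)
  qed
qed

lemma bern_family_bound:
  fixes c :: "nat \<Rightarrow> 'a::euclidean_space set \<Rightarrow> real"
  assumes c: "\<And>j. j < N \<Longrightarrow> is_bernoulli (c j)" and \<iota>: "\<iota> \<in> Inj N n"
  shows "(\<integral>\<^sup>+xs. ennreal (\<Prod>j<N. c j (cfgI \<iota> n xs j)) \<partial>PiM {..<n} (\<lambda>_. lborel)) \<le> 1"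
proof -
  have "\<forall>j. \<exists>r p. j < N \<longrightarrow> (0 \<le> r \<and> r \<le> 1 \<and> p \<in> borel_measurable lborel \<and> (\<forall>x. 0 \<le> p x)
      \<and> (\<integral>\<^sup>+ x. ennreal (p x) \<partial>lborel) = 1 \<and> c j = bernoulli_density r p)"
  proof
    fix j show "\<exists>r p. j < N \<longrightarrow> (0 \<le> r \<and> r \<le> 1 \<and> p \<in> borel_measurable lborel \<and> (\<forall>x. 0 \<le> p x)
      \<and> (\<integral>\<^sup>+ x. ennreal (p x) \<partial>lborel) = 1 \<and> c j = bernoulli_density r p)"
    proof (cases "j < N")
      case True
      obtain r p where "0 \<le> r" "r \<le> 1" "p \<in> borel_measurable lborel" "\<And>x. 0 \<le> p x"
        "(\<integral>\<^sup>+ x. ennreal (p x) \<partial>lborel) = 1" "c j = bernoulli_density r p"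
        using bern_obtain[OF c[OF True]] by blast
      then show ?thesis by blast
    qed simp
  qed
  then obtain R P where RP: "\<And>j. j < N \<Longrightarrow> 0 \<le> R j \<and> R j \<le> 1 \<and> P j \<in> borel_measurable lborel \<and> (\<forall>x. 0 \<le> P j x)
      \<and> (\<integral>\<^sup>+ x. ennreal (P j x) \<partial>lborel) = 1 \<and> c j = bernoulli_density (R j) (P j)"
    by metis
  have inj\<iota>: "inj_on \<iota> {..<n}" using \<iota> by (simp add: Inj_def)
  have img: "\<iota> ` {..<n} \<subseteq> {..<N}" by (rule Inj_image[OF \<iota>])
  have \<iota>N: "\<iota> k < N" if "k < n" for k using img that by auto
  have pw: "(\<Prod>j<N. c j (cfgI \<iota> n xs j)) \<le> (\<Prod>k<n. P (\<iota> k) (xs k))" for xs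
  proof -
    have "(\<Prod>j<N. c j (cfgI \<iota> n xs j)) \<le> (\<Prod>j<N. if j \<in> \<iota> ` {..<n} then P j (xs (inv_into {..<n} \<iota> j)) else 1)"
    proof (rule prod_mono)
      fix j assume j: "j \<in> {..<N}"
      have r: "0 \<le> R j" "R j \<le> 1" "\<And>x. 0 \<le> P j x" and cj: "c j = bernoulli_density (R j) (P j)" using RP j by auto
      show "0 \<le> c j (cfgI \<iota> n xs j) \<and> c j (cfgI \<iota> n xs j) \<le> (if j \<in> \<iota> ` {..<n} then P j (xs (inv_into {..<n} \<iota> j)) else 1)"
        using r by (auto simp: cj cfgI_def mult_left_le_one_le mult_le_one intro: mult_nonneg_nonneg)
    qed
    also have "\<dots> = (\<Prod>j\<in>{..<N} \<inter> \<iota> ` {..<n}. P j (xs (inv_into {..<n} \<iota> j)))"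
      by (rule prod.inter_restrict[symmetric]) simp
    also have "{..<N} \<inter> \<iota> ` {..<n} = \<iota> ` {..<n}" using img by blast
    also have "(\<Prod>j\<in>\<iota> ` {..<n}. P j (xs (inv_into {..<n} \<iota> j))) = (\<Prod>k<n. P (\<iota> k) (xs (inv_into {..<n} \<iota> (\<iota> k))))"
      by (rule prod.reindex[OF inj\<iota>, unfolded comp_def])
    also have "\<dots> = (\<Prod>k<n. P (\<iota> k) (xs k))"
      by (rule prod.cong[OF refl]) (use inj\<iota> in \<open>simp add: inv_into_f_f\<close>)
    finally show ?thesis .
  qed
  have "(\<integral>\<^sup>+xs. ennreal (\<Prod>j<N. c j (cfgI \<iota> n xs j)) \<partial>PiM {..<n} (\<lambda>_. lborel))
      \<le> (\<integral>\<^sup>+xs. (\<Prod>k<n. ennreal (P (\<iota> k) (xs k))) \<partial>PiM {..<n} (\<lambda>_. lborel::'a measure))"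
  proof (rule nn_integral_mono)
    fix xs :: "nat \<Rightarrow> 'a"
    have "ennreal (\<Prod>j<N. c j (cfgI \<iota> n xs j)) \<le> ennreal (\<Prod>k<n. P (\<iota> k) (xs k))"
      using pw by (rule ennreal_leI)
    also have "\<dots> = (\<Prod>k<n. ennreal (P (\<iota> k) (xs k)))"
      by (rule prod_ennreal[symmetric]) (use RP \<iota>N in auto)
    finally show "ennreal (\<Prod>j<N. c j (cfgI \<iota> n xs j)) \<le> (\<Prod>k<n. ennreal (P (\<iota> k) (xs k)))" .
  qed
  also have "\<dots> = (\<Prod>k<n. \<integral>\<^sup>+y. ennreal (P (\<iota> k) y) \<partial>lborel)"
    by (rule product_sigma_finite.product_nn_integral_prod[OF ps_lborel]) (use RP \<iota>N in auto)
  also have "\<dots> = 1" using RP \<iota>N by simp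
  finally show ?thesis .
qed


lemma ennreal_pos_part: "ennreal x = ennreal (max x 0)"
  by (cases "x \<ge> 0") (auto simp: ennreal_neg)

lemma sum_ennreal_pos: "finite B \<Longrightarrow> (\<Sum>b\<in>B. ennreal (x b)) = ennreal (\<Sum>b\<in>B. max (x b) 0)"
proof -
  assume fin: "finite B"
  have "(\<Sum>b\<in>B. ennreal (x b)) = (\<Sum>b\<in>B. ennreal (max (x b) 0))"
    by (rule sum.cong[OF refl]) (rule ennreal_pos_part)
  also have "\<dots> = ennreal (\<Sum>b\<in>B. max (x b) 0)" by (rule sum_ennreal) simp
  finally show ?thesis .
qed

lemma e2ennreal_xlogy_pos:
  assumes "0 < s"
  shows "e2ennreal (xlogy p s) = ennreal (p * ln s)" "e2ennreal (- xlogy p s) = ennreal (- (p * ln s))"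
  using assms by (auto simp: xlogy_def e2ennreal_ereal e2ennreal_neg)

lemma e2ennreal_xlogy_zero:
  "e2ennreal (xlogy p 0) = 0" "e2ennreal (- xlogy p 0) = (if p = 0 then 0 else \<infinity>)"
  by (auto simp: xlogy_def e2ennreal_neg)

lemma pw_lab:
  fixes c :: "'i \<Rightarrow> real" and p :: "'i \<Rightarrow> 'j \<Rightarrow> real"
  assumes finA: "finite A" and finB: "finite B"
    and c: "\<And>a. a \<in> A \<Longrightarrow> 0 \<le> c a" and p: "\<And>a b. a \<in> A \<Longrightarrow> b \<in> B \<Longrightarrow> 0 \<le> p a b"
    and F: "F = (\<Sum>a\<in>A. c a * (\<Sum>b\<in>B. p a b))" and G: "0 \<le> G" and K: "1 \<le> K"
  shows "(\<Sum>a\<in>A. ennreal (c a) * (\<Sum>b\<in>B. e2ennreal (xlogy (p a b) (K * G)))) + e2ennreal (- xlogy F G)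
       = (\<Sum>a\<in>A. ennreal (c a) * (\<Sum>b\<in>B. e2ennreal (- xlogy (p a b) (K * G)))) + e2ennreal (xlogy F G)
         + ennreal (ln K * F)"
proof (cases "G = 0")
  case True
  have F0: "0 \<le> F" unfolding F using c p by (intro sum_nonneg mult_nonneg_nonneg) auto
  show ?thesis
  proof (cases "F = 0")
    case F0': True
    have "c a * p a b = 0" if "a \<in> A" "b \<in> B" for a b
    proof -
      have "c a * (\<Sum>b\<in>B. p a b) = 0"
        using F0' F c p finA finB sum_nonneg_eq_0_iff[of A "\<lambda>a. c a * (\<Sum>b\<in>B. p a b)"] that
        by (simp add: sum_nonneg)
      then have "c a = 0 \<or> (\<Sum>b\<in>B. p a b) = 0" by simp
      then show ?thesis using sum_nonneg_eq_0_iff[of B "p a"] finB p that by auto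
    qed
    then have t0: "ennreal (c a) * (\<Sum>b\<in>B. e2ennreal (- xlogy (p a b) (K * G))) = 0" if a: "a \<in> A" for a
    proof (cases "c a = 0")
      case False
      then have "\<forall>b\<in>B. p a b = 0" using \<open>\<And>a b. a \<in> A \<Longrightarrow> b \<in> B \<Longrightarrow> c a * p a b = 0\<close> a by auto
      then have "(\<Sum>b\<in>B. e2ennreal (- xlogy (p a b) (K * G))) = 0"
        using True by (simp add: e2ennreal_xlogy_zero)
      then show ?thesis by simp
    qed simp
    have "(\<Sum>a\<in>A. ennreal (c a) * (\<Sum>b\<in>B. e2ennreal (- xlogy (p a b) (K * G)))) = 0"
      by (intro sum.neutral ballI t0)
    moreover have "(\<Sum>b\<in>B. e2ennreal (xlogy (p a b) (K * G))) = 0" for a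
      using True by (simp add: e2ennreal_xlogy_zero)
    ultimately show ?thesis using True F0' by (simp only: e2ennreal_xlogy_zero sum.neutral mult_zero_right) simp
  next
    case False
    then have "F > 0" using F0 by simp
    have "\<exists>a\<in>A. c a * (\<Sum>b\<in>B. p a b) > 0"
    proof (rule ccontr)
      assume "\<not> ?thesis"
      then have "F \<le> 0" unfolding F by (intro sum_nonpos) (auto simp: not_less)
      then show False using \<open>F > 0\<close> by simp
    qed
    then obtain a where a: "a \<in> A" "c a * (\<Sum>b\<in>B. p a b) > 0" by blast
    then have ca: "c a > 0" and "(\<Sum>b\<in>B. p a b) > 0"
      using c[OF a(1)] p a(1) by (auto simp: zero_less_mult_iff sum_nonneg)
    have "\<exists>b\<in>B. p a b \<noteq> 0"
    proof (rule ccontr)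
      assume "\<not> ?thesis"
      then have "(\<Sum>b\<in>B. p a b) = 0" by simp
      then show False using \<open>(\<Sum>b\<in>B. p a b) > 0\<close> by simp
    qed
    then obtain b where b: "b \<in> B" "p a b \<noteq> 0" by blast
    have "(\<Sum>b\<in>B. e2ennreal (- xlogy (p a b) (K * G))) = \<infinity>"
    proof -
      have "e2ennreal (- xlogy (p a b) (K * G)) = \<infinity>" using b True by (simp add: e2ennreal_xlogy_zero)
      moreover have "e2ennreal (- xlogy (p a b) (K * G)) \<le> (\<Sum>b\<in>B. e2ennreal (- xlogy (p a b) (K * G)))"
        by (rule member_le_sum) (use b finB in auto)
      ultimately show ?thesis by (simp add: top_unique)
    qed
    then have "ennreal (c a) * (\<Sum>b\<in>B. e2ennreal (- xlogy (p a b) (K * G))) = \<infinity>"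
      using ca by (simp add: ennreal_mult_top)
    then have "(\<Sum>a\<in>A. ennreal (c a) * (\<Sum>b\<in>B. e2ennreal (- xlogy (p a b) (K * G)))) = \<infinity>"
    proof -
      have "ennreal (c a) * (\<Sum>b\<in>B. e2ennreal (- xlogy (p a b) (K * G))) \<le> (\<Sum>a\<in>A. ennreal (c a) * (\<Sum>b\<in>B. e2ennreal (- xlogy (p a b) (K * G))))"
        by (rule member_le_sum) (use a finA in auto)
      then show ?thesis using \<open>ennreal (c a) * (\<Sum>b\<in>B. e2ennreal (- xlogy (p a b) (K * G))) = \<infinity>\<close> by (simp add: top_unique)
    qed
    then show ?thesis using True False by (simp add: e2ennreal_xlogy_zero)
  qed
next
  case False
  then have G0: "0 < G" using G by simp
  have KG: "0 < K * G" using K G0 by simp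
  define x where "x a b = p a b * ln (K * G)" for a b
  define y where "y = F * ln G"
  define z where "z = ln K * F"
  have z0: "0 \<le> z" unfolding z_def F using K c p by (intro mult_nonneg_nonneg sum_nonneg) auto
  have real_id: "(\<Sum>a\<in>A. c a * (\<Sum>b\<in>B. x a b)) = y + z"
  proof -
    let ?L = "ln K + ln G"
    have "x a b = p a b * ?L" for a b
      using K G0 by (simp add: x_def ln_mult)
    then have "(\<Sum>b\<in>B. x a b) = (\<Sum>b\<in>B. p a b) * ?L" for a
      by (simp add: sum_distrib_right)
    then have "(\<Sum>a\<in>A. c a * (\<Sum>b\<in>B. x a b)) = (\<Sum>a\<in>A. c a * (\<Sum>b\<in>B. p a b) * ?L)"
      by (simp add: mult.assoc)
    also have "\<dots> = F * ?L" unfolding F by (rule sum_distrib_right[symmetric])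
    also have "\<dots> = y + z" by (simp add: y_def z_def distrib_left mult.commute)
    finally show ?thesis .
  qed
  have "(\<Sum>a\<in>A. ennreal (c a) * (\<Sum>b\<in>B. e2ennreal (xlogy (p a b) (K * G)))) + e2ennreal (- xlogy F G)
      = ennreal ((\<Sum>a\<in>A. c a * (\<Sum>b\<in>B. max (x a b) 0)) + max (- y) 0)"
  proof -
    have "(\<Sum>b\<in>B. e2ennreal (xlogy (p a b) (K * G))) = ennreal (\<Sum>b\<in>B. max (x a b) 0)" for a
      using KG finB by (simp add: e2ennreal_xlogy_pos x_def sum_ennreal_pos)
    then have "(\<Sum>a\<in>A. ennreal (c a) * (\<Sum>b\<in>B. e2ennreal (xlogy (p a b) (K * G)))) = ennreal (\<Sum>a\<in>A. c a * (\<Sum>b\<in>B. max (x a b) 0))"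
      using c by (simp add: ennreal_mult' sum_ennreal[symmetric] sum_nonneg)
    moreover have "e2ennreal (- xlogy F G) = ennreal (max (- y) 0)"
      using G0 ennreal_pos_part[of "- (F * ln G)"] by (simp add: e2ennreal_xlogy_pos y_def)
    ultimately show ?thesis using c by (simp add: ennreal_plus sum_nonneg)
  qed
  also have "\<dots> = ennreal ((\<Sum>a\<in>A. c a * (\<Sum>b\<in>B. max (- x a b) 0)) + max y 0 + z)"
  proof (rule arg_cong[where f = ennreal])
    have "max (x a b) 0 = max (- x a b) 0 + x a b" for a b by auto
    then have "(\<Sum>a\<in>A. c a * (\<Sum>b\<in>B. max (x a b) 0)) = (\<Sum>a\<in>A. c a * (\<Sum>b\<in>B. max (- x a b) 0)) + (\<Sum>a\<in>A. c a * (\<Sum>b\<in>B. x a b))"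
      by (simp add: sum.distrib distrib_left)
    moreover have "max (- y) 0 = max y 0 - y" by auto
    ultimately show "(\<Sum>a\<in>A. c a * (\<Sum>b\<in>B. max (x a b) 0)) + max (- y) 0 = (\<Sum>a\<in>A. c a * (\<Sum>b\<in>B. max (- x a b) 0)) + max y 0 + z"
      using real_id by simp
  qed
  also have "\<dots> = (\<Sum>a\<in>A. ennreal (c a) * (\<Sum>b\<in>B. e2ennreal (- xlogy (p a b) (K * G)))) + e2ennreal (xlogy F G) + ennreal (ln K * F)"
  proof -
    have "(\<Sum>b\<in>B. e2ennreal (- xlogy (p a b) (K * G))) = ennreal (\<Sum>b\<in>B. max (- x a b) 0)" for a
      using KG finB sum_ennreal_pos[OF finB, of "\<lambda>b. - x a b"] by (simp add: e2ennreal_xlogy_pos x_def)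
    then have "(\<Sum>a\<in>A. ennreal (c a) * (\<Sum>b\<in>B. e2ennreal (- xlogy (p a b) (K * G)))) = ennreal (\<Sum>a\<in>A. c a * (\<Sum>b\<in>B. max (- x a b) 0))"
      using c by (simp add: ennreal_mult' sum_ennreal[symmetric] sum_nonneg)
    moreover have "e2ennreal (xlogy F G) = ennreal (max y 0)"
      using G0 ennreal_pos_part[of "F * ln G"] by (simp add: e2ennreal_xlogy_pos y_def)
    ultimately show ?thesis using c z0 by (simp add: ennreal_plus sum_nonneg z_def)
  qed
  finally show ?thesis .
qed

lemma ennreal3: "ennreal a + ennreal b + ennreal c = ennreal (max a 0 + max b 0 + max c 0)"
proof -
  have "ennreal (max a 0 + max b 0 + max c 0) = ennreal (max a 0) + ennreal (max b 0) + ennreal (max c 0)"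
    by (simp add: ennreal_plus)
  then show ?thesis by (metis ennreal_pos_part)
qed

lemma pw_kl:
  assumes p: "0 \<le> p" and q: "0 \<le> q"
  shows "e2ennreal (kl_term p q) + e2ennreal (xlogy p q) + e2ennreal (- xlogy p p)
       = e2ennreal (- kl_term p q) + e2ennreal (- xlogy p q) + e2ennreal (xlogy p p)"
proof (cases "p = 0")
  case True then show ?thesis by (simp add: kl_term_def xlogy_def)
next
  case False
  then have p0: "0 < p" using p by simp
  show ?thesis
  proof (cases "q = 0")
    case True then show ?thesis using p0 by (simp add: kl_term_def xlogy_def e2ennreal_neg)
  next
    case False
    then have q0: "0 < q" using q by simp
    define u where "u = p * ln p"
    define v where "v = p * ln q"
    have kl: "kl_term p q = ereal (u - v)"
      using p0 q0 by (simp add: kl_term_def u_def v_def ln_div right_diff_distrib)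
    have e: "xlogy p q = ereal v" "xlogy p p = ereal u" using p0 q0 by (simp_all add: xlogy_def u_def v_def)
    have "ennreal (u - v) + ennreal v + ennreal (- u) = ennreal (- (u - v)) + ennreal (- v) + ennreal u"
    proof -
      have "ennreal (u - v) + ennreal v + ennreal (- u) = ennreal (max (u - v) 0 + max v 0 + max (- u) 0)"
        by (rule ennreal3)
      also have "\<dots> = ennreal (max (- (u - v)) 0 + max (- v) 0 + max u 0)"
        by (rule arg_cong[where f = ennreal]) auto
      also have "\<dots> = ennreal (- (u - v)) + ennreal (- v) + ennreal u"
        by (rule ennreal3[symmetric])
      finally show ?thesis .
    qed
    then show ?thesis by (simp add: kl e e2ennreal_ereal)
  qed
qed

lemma gibbs_w:
  assumes w: "0 < w" "w \<le> 1" and p: "0 \<le> p" and wp: "w * p \<le> F" and s: "0 \<le> s"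
  shows "e2ennreal (xlogy p s) \<le> ennreal (\<bar>F * ln F\<bar> / w + F * ln (1 / w) / w + s)"
proof (cases "p = 0 \<or> s = 0")
  case True then show ?thesis by (auto simp: xlogy_def e2ennreal_neg)
next
  case False
  then have p0: "0 < p" and s0: "0 < s" using p s by auto
  have F0: "0 < F" using wp w p0 by (metis mult_pos_pos order_less_le_trans)
  have lnw: "0 \<le> ln (1 / w)" using w by simp
  have b1: "p * ln s \<le> p * ln p + s"
  proof -
    have "ln (s / p) \<le> s / p - 1" using s0 p0 by (intro ln_le_minus_one) simp
    then have "p * ln (s / p) \<le> p * (s / p - 1)" using p0 by (simp add: mult_left_mono)
    also have "\<dots> = s - p" using p0 by (simp add: field_simps)
    finally have "p * ln (s / p) \<le> s - p" .
    moreover have "ln (s / p) = ln s - ln p" using s0 p0 by (simp add: ln_div)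
    ultimately show ?thesis using p0 by (simp add: right_diff_distrib)
  qed
  have b2: "p * ln p \<le> \<bar>F * ln F\<bar> / w + F * ln (1 / w) / w"
  proof (cases "p \<le> 1")
    case True
    then have "p * ln p \<le> 0" using p0 by (simp add: mult_nonneg_nonpos)
    moreover have "0 \<le> \<bar>F * ln F\<bar> / w + F * ln (1 / w) / w" using w F0 lnw by simp
    ultimately show ?thesis by linarith
  next
    case False
    define q where "q = F / w"
    have pq: "p \<le> q" using wp w by (simp add: q_def field_simps mult.commute)
    have "p * ln p \<le> q * ln q"
    proof (rule mult_mono)
      show "ln p \<le> ln q" using pq p0 by simp
      show "0 \<le> ln p" using False by simp
    qed (use pq p0 in auto)
    also have "q * ln q = F * ln F / w + F * ln (1 / w) / w"
      using F0 w by (simp add: q_def ln_div field_simps)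
    also have "\<dots> \<le> \<bar>F * ln F\<bar> / w + F * ln (1 / w) / w"
      using w by (simp add: divide_right_mono)
    finally show ?thesis .
  qed
  have "xlogy p s = ereal (p * ln s)" using False by (simp add: xlogy_def)
  then have "e2ennreal (xlogy p s) = ennreal (p * ln s)" by (simp add: e2ennreal_ereal)
  also have "\<dots> \<le> ennreal (\<bar>F * ln F\<bar> / w + F * ln (1 / w) / w + s)"
    using b1 b2 by (intro ennreal_leI) linarith
  finally show ?thesis .
qed

lemma kl_neg_bound:
  assumes p: "0 \<le> p" and q: "0 \<le> q"
  shows "e2ennreal (- kl_term p q) \<le> ennreal q"
proof (cases "p = 0 \<or> q = 0")
  case True then show ?thesis by (auto simp: kl_term_def e2ennreal_neg)
next
  case False
  then have p0: "0 < p" and q0: "0 < q" using p q by auto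
  have "ln (q / p) \<le> q / p - 1" using p0 q0 by (intro ln_le_minus_one) simp
  then have "p * ln (q / p) \<le> p * (q / p - 1)" using p0 by (simp add: mult_left_mono)
  also have "\<dots> = q - p" using p0 by (simp add: field_simps)
  finally have h: "p * ln (q / p) \<le> q - p" .
  have "- (p * ln (p / q)) \<le> q"
    using h p0 q0 by (simp add: ln_div algebra_simps)
  moreover have "- kl_term p q = ereal (- (p * ln (p / q)))" using False by (simp add: kl_term_def)
  ultimately show ?thesis by (simp add: e2ennreal_ereal ennreal_leI)
qed

lemma rfs_rep:
  fixes u :: "'a::euclidean_space set \<Rightarrow> ennreal"
  assumes rep: "\<And>n. AE xs in PiM {..<n} (\<lambda>_. lborel::'a measure). u (xs ` {..<n}) = U n xs"
    and zero: "\<And>n xs. N < n \<Longrightarrow> U n xs = 0"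
  shows "rfs_nn_integral u = (\<Sum>n\<in>{..N}. ennreal (1 / fact n) * (\<integral>\<^sup>+xs. U n xs \<partial>PiM {..<n} (\<lambda>_. lborel)))"
proof -
  have "rfs_nn_integral u = (\<Sum>n. ennreal (1 / fact n) * (\<integral>\<^sup>+xs. U n xs \<partial>PiM {..<n} (\<lambda>_. lborel::'a measure)))"
    unfolding rfs_nn_integral_def using nn_integral_cong_AE[OF rep] by simp
  also have "\<dots> = (\<Sum>n\<in>{..N}. ennreal (1 / fact n) * (\<integral>\<^sup>+xs. U n xs \<partial>PiM {..<n} (\<lambda>_. lborel)))"
    by (rule suminf_finite) (auto simp: zero not_le)
  finally show ?thesis .
qed

lemma Inj_empty: "N < n \<Longrightarrow> Inj N n = {}"
proof (rule ccontr)
  assume "N < n" "Inj N n \<noteq> {}"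
  then obtain \<iota> where "\<iota> \<in> Inj N n" by blast
  then have "card (\<iota> ` {..<n}) = n" "\<iota> ` {..<n} \<subseteq> {..<N}" by (simp_all add: Inj_card_image Inj_image)
  then have "n \<le> N" by (metis card_lessThan card_mono finite_lessThan)
  then show False using \<open>N < n\<close> by simp
qed

lemma meas_e2x:
  assumes [measurable]: "F \<in> borel_measurable M" "S \<in> borel_measurable M"
  shows "(\<lambda>x. e2ennreal (xlogy (F x) (S x))) \<in> borel_measurable M"
    "(\<lambda>x. e2ennreal (- xlogy (F x) (S x))) \<in> borel_measurable M"
    "(\<lambda>x. e2ennreal (kl_term (F x) (S x))) \<in> borel_measurable M"
    "(\<lambda>x. e2ennreal (- kl_term (F x) (S x))) \<in> borel_measurable M"
  by measurable

lemma sum_swap_w: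
  fixes c :: "nat \<Rightarrow> ennreal" and X :: "'b \<Rightarrow> nat \<Rightarrow> ennreal"
  shows "(\<Sum>a\<in>A. v a * (\<Sum>n\<in>I. c n * X a n)) = (\<Sum>n\<in>I. c n * (\<Sum>a\<in>A. v a * X a n))"
proof -
  have "(\<Sum>a\<in>A. v a * (\<Sum>n\<in>I. c n * X a n)) = (\<Sum>a\<in>A. \<Sum>n\<in>I. c n * (v a * X a n))"
    by (simp add: sum_distrib_left mult.left_commute)
  also have "\<dots> = (\<Sum>n\<in>I. \<Sum>a\<in>A. c n * (v a * X a n))" by (rule sum.swap)
  also have "\<dots> = (\<Sum>n\<in>I. c n * (\<Sum>a\<in>A. v a * X a n))" by (simp add: sum_distrib_left)
  finally show ?thesis .
qed

lemma int3_fin: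
  assumes m: "u1 \<in> borel_measurable M" "u2 \<in> borel_measurable M" "u3 \<in> borel_measurable M"
    and nn: "\<And>x. 0 \<le> u1 x" "\<And>x. 0 \<le> u2 x" "\<And>x. 0 \<le> u3 x"
    and fin: "(\<integral>\<^sup>+x. ennreal (u1 x) \<partial>M) < \<infinity>" "(\<integral>\<^sup>+x. ennreal (u2 x) \<partial>M) < \<infinity>" "(\<integral>\<^sup>+x. ennreal (u3 x) \<partial>M) < \<infinity>"
    and c: "0 \<le> \<alpha>" "0 \<le> \<beta>" "0 \<le> \<gamma>"
  shows "(\<integral>\<^sup>+x. ennreal (\<alpha> * u1 x + \<beta> * u2 x + \<gamma> * u3 x) \<partial>M) < \<infinity>"
proof -
  have eq: "ennreal (\<alpha> * u1 x + \<beta> * u2 x + \<gamma> * u3 x) = ennreal \<alpha> * ennreal (u1 x) + ennreal \<beta> * ennreal (u2 x) + ennreal \<gamma> * ennreal (u3 x)" for x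
    using nn c by (simp add: ennreal_plus ennreal_mult)
  have "(\<integral>\<^sup>+x. ennreal (\<alpha> * u1 x + \<beta> * u2 x + \<gamma> * u3 x) \<partial>M)
      = ennreal \<alpha> * (\<integral>\<^sup>+x. ennreal (u1 x) \<partial>M) + ennreal \<beta> * (\<integral>\<^sup>+x. ennreal (u2 x) \<partial>M) + ennreal \<gamma> * (\<integral>\<^sup>+x. ennreal (u3 x) \<partial>M)"
    unfolding eq using m by (simp add: nn_integral_add nn_integral_cmult)
  also have "\<dots> < \<infinity>" using fin by (simp add: ennreal_mult_less_top)
  finally show ?thesis .
qed

lemma enn_fin_obtain:
  assumes "(P::ennreal) < \<infinity>"
  obtains p where "0 \<le> p" "P = ennreal p"
  using assms by (cases P rule: ennreal_cases) auto

lemma ereal_wdiff: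
  assumes w: "0 \<le> w" and P: "w = 0 \<or> P < \<infinity>"
  shows "ereal w * (enn2ereal P - enn2ereal Q) = enn2ereal (ennreal w * P) - enn2ereal (ennreal w * Q)"
proof (cases "w = 0")
  case True then show ?thesis by simp
next
  case False
  then have w0: "0 < w" and Pf: "P < \<infinity>" using w P by auto
  obtain p where p: "0 \<le> p" "P = ennreal p" using Pf by (rule enn_fin_obtain)
  show ?thesis
  proof (cases Q rule: ennreal_cases)
    case (real q)
    then show ?thesis using w0 p by (simp add: ennreal_mult[symmetric] algebra_simps)
  next
    case top
    have "ennreal w * top = top" using w0 by (simp add: ennreal_mult_top)
    then show ?thesis using w0 p top by (simp add: ennreal_mult[symmetric])
  qed
qed

lemma ereal_diff_add:
  fixes x1 x2 :: real and y1 y2 :: ereal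
  assumes "0 \<le> y1" "0 \<le> y2"
  shows "(ereal x1 - y1) + (ereal x2 - y2) = ereal (x1 + x2) - (y1 + y2)"
  using assms by (cases y1; cases y2) auto

lemma ereal_sumdiff:
  assumes "finite I" "\<And>a. a \<in> I \<Longrightarrow> P a < \<infinity>"
  shows "(\<Sum>a\<in>I. enn2ereal (P a) - enn2ereal (Q a)) = enn2ereal (\<Sum>a\<in>I. P a) - enn2ereal (\<Sum>a\<in>I. Q a)"
  using assms
proof (induction I rule: finite_induct)
  case empty then show ?case by simp
next
  case (insert a I)
  have Pa: "P a < \<infinity>" and SP: "(\<Sum>a\<in>I. P a) < \<infinity>" using insert by (auto simp: ennreal_sum_less_top)
  obtain p where p: "0 \<le> p" "P a = ennreal p" using Pa by (rule enn_fin_obtain)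
  obtain sp where sp: "0 \<le> sp" "(\<Sum>a\<in>I. P a) = ennreal sp" using SP by (rule enn_fin_obtain)
  have "(\<Sum>a\<in>insert a I. enn2ereal (P a) - enn2ereal (Q a)) = (enn2ereal (P a) - enn2ereal (Q a)) + (enn2ereal (\<Sum>a\<in>I. P a) - enn2ereal (\<Sum>a\<in>I. Q a))"
    using insert by simp
  also have "\<dots> = ereal (p + sp) - (enn2ereal (Q a) + enn2ereal (\<Sum>a\<in>I. Q a))"
    using p sp by (simp add: ereal_diff_add)
  also have "\<dots> = enn2ereal (\<Sum>a\<in>insert a I. P a) - enn2ereal (\<Sum>a\<in>insert a I. Q a)"
  proof -
    have "(\<Sum>a\<in>insert a I. P a) = ennreal (p + sp)" using insert p sp by simp
    moreover have "enn2ereal (\<Sum>a\<in>insert a I. Q a) = enn2ereal (Q a) + enn2ereal (\<Sum>a\<in>I. Q a)"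
      using insert by (simp add: plus_ennreal.rep_eq)
    ultimately show ?thesis using p sp by (simp add: plus_ennreal.rep_eq)
  qed
  finally show ?case .
qed

lemma ereal_S1:
  fixes P Q EN EP C :: ennreal
  assumes eq: "P + EN = Q + EP + C" and fin: "P < \<infinity>" "EP < \<infinity>" "C < \<infinity>"
  shows "enn2ereal P - enn2ereal Q = (enn2ereal EP - enn2ereal EN) + enn2ereal C"
proof -
  obtain p where p: "0 \<le> p" "P = ennreal p" using fin(1) by (rule enn_fin_obtain)
  obtain ep where ep: "0 \<le> ep" "EP = ennreal ep" using fin(2) by (rule enn_fin_obtain)
  obtain c where c: "0 \<le> c" "C = ennreal c" using fin(3) by (rule enn_fin_obtain)
  show ?thesis
  proof (cases EN rule: ennreal_cases)
    case top
    then have "Q + EP + C = top" using eq by simp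
    then have "Q = top" using ep c by simp
    then show ?thesis using top p ep c by simp
  next
    case (real en)
    note ENr = real
    show ?thesis
    proof (cases Q rule: ennreal_cases)
      case top
      then have "P + EN = top" using eq by simp
      then show ?thesis using p ENr by simp
    next
      case (real q)
      note real2 = real
      have "ennreal (p + en) = ennreal (q + ep + c)"
        using eq p ep c ENr real2 by simp
      then have "p + en = q + ep + c" using p ep c ENr real2 by (subst (asm) ennreal_inj) auto
      then show ?thesis using p ep c ENr real2 by simp
    qed
  qed
qed

lemma ereal_S2:
  fixes KP KN EP EN U1 U2 :: ennreal
  assumes eq: "KP + EP + U2 = KN + EN + U1" and fin: "KN < \<infinity>" "EP < \<infinity>" "U2 < \<infinity>" "U1 < \<infinity>"
  shows "enn2ereal KP - enn2ereal KN = (enn2ereal U1 - enn2ereal U2) - (enn2ereal EP - enn2ereal EN)"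
proof -
  obtain kn where kn: "0 \<le> kn" "KN = ennreal kn" using fin(1) by (rule enn_fin_obtain)
  obtain ep where ep: "0 \<le> ep" "EP = ennreal ep" using fin(2) by (rule enn_fin_obtain)
  obtain un where un: "0 \<le> un" "U2 = ennreal un" using fin(3) by (rule enn_fin_obtain)
  obtain up where up: "0 \<le> up" "U1 = ennreal up" using fin(4) by (rule enn_fin_obtain)
  show ?thesis
  proof (cases EN rule: ennreal_cases)
    case top
    then have "KP + EP + U2 = top" using eq by simp
    then have "KP = top" using ep un by simp
    then show ?thesis using top kn ep un up by simp
  next
    case (real en)
    note ENr = real
    show ?thesis
    proof (cases KP rule: ennreal_cases)
      case top
      then have "KN + EN + U1 = top" using eq by simp
      then show ?thesis using kn ENr up by simp
    next
      case (real kp)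
      note real2 = real
      have "ennreal (kp + ep + un) = ennreal (kn + en + up)"
        using eq kn ep un up ENr real2 by simp
      then have "kp + ep + un = kn + en + up" using kn ep un up ENr real2 by (subst (asm) ennreal_inj) auto
      then show ?thesis using kn ep un up ENr real2 by simp
    qed
  qed
qed

lemma argmax_shift:
  assumes "\<And>x. x \<in> S \<Longrightarrow> F1 x = F3 x + c" and "\<bar>c\<bar> \<noteq> \<infinity>"
  shows "argmax_on S F1 = argmax_on S F3"
proof -
  obtain r where r: "c = ereal r" using assms(2) by (cases c) auto
  have "F1 y \<le> F1 x \<longleftrightarrow> F3 y \<le> F3 x" if "x \<in> S" "y \<in> S" for x y
    using assms(1)[OF that(1)] assms(1)[OF that(2)] r by (cases "F3 x"; cases "F3 y") auto
  then show ?thesis unfolding argmax_on_def by blast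
qed

lemma argmin_neg:
  assumes "\<And>x. x \<in> S \<Longrightarrow> F2 x = d - F3 x" and "\<bar>d\<bar> \<noteq> \<infinity>"
  shows "argmin_on S F2 = argmax_on S F3"
proof -
  obtain r where r: "d = ereal r" using assms(2) by (cases d) auto
  have "F2 x \<le> F2 y \<longleftrightarrow> F3 y \<le> F3 x" if "x \<in> S" "y \<in> S" for x y
    using assms(1)[OF that(1)] assms(1)[OF that(2)] r by (cases "F3 x"; cases "F3 y") auto
  then show ?thesis unfolding argmax_on_def argmin_on_def by blast
qed

locale mbm_setting =
  fixes H :: "'h set" and A :: "'h list set" and w :: "'h list \<Rightarrow> real"
    and f :: "'h \<Rightarrow> 'a::euclidean_space set \<Rightarrow> real" and N :: nat
  assumes bern_f: "\<And>h. h \<in> H \<Longrightarrow> is_bernoulli (f h)"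
    and A_fin: "finite A"
    and A_sub: "\<And>a. a \<in> A \<Longrightarrow> length a = N \<and> set a \<subseteq> H"
    and w_nonneg: "\<And>a. a \<in> A \<Longrightarrow> 0 \<le> w a"
    and w_sum: "(\<Sum>a\<in>A. w a) = 1"
    and ent_f: "rfs_nn_integral (\<lambda>X. ennreal \<bar>mbm_density A w f N X * ln (mbm_density A w f N X)\<bar>) < \<infinity>"
begin

abbreviation "fm \<equiv> mbm_density A w f N"

definition GS :: "('a set \<Rightarrow> real) list set" where
  "GS = {gs. length gs = N \<and> (\<forall>g\<in>set gs. is_bernoulli g)}"

definition Fa :: "'h list \<Rightarrow> (nat \<Rightarrow> 'a set) \<Rightarrow> real" where
  "Fa a Xs = (\<Prod>i<N. f (a ! i) (Xs i))"
definition Sg :: "('a set \<Rightarrow> real) list \<Rightarrow> (nat \<Rightarrow> 'a set) \<Rightarrow> real" where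
  "Sg gs Xs = (\<Sum>\<pi> | \<pi> permutes {..<N}. \<Prod>i<N. (gs ! \<pi> i) (Xs i))"
definition FF :: "'h list \<Rightarrow> (nat \<Rightarrow> nat) \<Rightarrow> nat \<Rightarrow> (nat \<Rightarrow> 'a) \<Rightarrow> real" where
  "FF a \<iota> n xs = (\<Prod>i<N. f (a ! i) (cfgI \<iota> n xs i))"
definition Ftot :: "nat \<Rightarrow> (nat \<Rightarrow> 'a) \<Rightarrow> real" where
  "Ftot n xs = (\<Sum>a\<in>A. w a * (\<Sum>\<iota>\<in>Inj N n. FF a \<iota> n xs))"
definition GG :: "('a set \<Rightarrow> real) list \<Rightarrow> nat \<Rightarrow> (nat \<Rightarrow> 'a) \<Rightarrow> real" where
  "GG gs n xs = (\<Sum>\<iota>\<in>Inj N n. \<Prod>j<N. (gs ! j) (cfgI \<iota> n xs j))"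

lemma fa_bern: "a \<in> A \<Longrightarrow> i < N \<Longrightarrow> is_bernoulli (f (a ! i))"
  using A_sub[of a] by (intro bern_f) (auto simp: nth_mem subset_iff)

lemma gs_bern: "gs \<in> GS \<Longrightarrow> i < N \<Longrightarrow> is_bernoulli (gs ! i)"
  by (auto simp: GS_def)

lemma w_le1: "a \<in> A \<Longrightarrow> w a \<le> 1"
  using member_le_sum[of a A w] w_nonneg A_fin w_sum by simp

lemma FF_nonneg: "a \<in> A \<Longrightarrow> 0 \<le> FF a \<iota> n xs"
  unfolding FF_def by (intro prod_nonneg) (use fa_bern bern_nonneg in auto)

lemma Ftot_nonneg: "0 \<le> Ftot n xs"
  unfolding Ftot_def by (intro sum_nonneg mult_nonneg_nonneg) (use w_nonneg FF_nonneg in auto)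

lemma GG_nonneg: "gs \<in> GS \<Longrightarrow> 0 \<le> GG gs n xs"
  unfolding GG_def by (intro sum_nonneg prod_nonneg) (use gs_bern bern_nonneg in auto)

lemma Ftot_big: "N < n \<Longrightarrow> Ftot n xs = 0"
  by (simp add: Ftot_def Inj_empty)

lemma GG_big: "N < n \<Longrightarrow> GG gs n xs = 0"
  by (simp add: GG_def Inj_empty)

lemma FF_le: "a \<in> A \<Longrightarrow> \<iota> \<in> Inj N n \<Longrightarrow> w a * FF a \<iota> n xs \<le> Ftot n xs"
proof -
  assume a: "a \<in> A" and \<iota>: "\<iota> \<in> Inj N n"
  have "w a * FF a \<iota> n xs \<le> w a * (\<Sum>\<iota>\<in>Inj N n. FF a \<iota> n xs)"
    using a \<iota> w_nonneg[OF a] FF_nonneg[OF a] by (intro mult_left_mono member_le_sum) auto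
  also have "\<dots> \<le> Ftot n xs" unfolding Ftot_def
    using a A_fin w_nonneg FF_nonneg
    by (intro member_le_sum[of a A "\<lambda>a. w a * (\<Sum>\<iota>\<in>Inj N n. FF a \<iota> n xs)"]) (auto intro!: mult_nonneg_nonneg sum_nonneg)
  finally show ?thesis .
qed

lemma rep_f: "AE xs in PiM {..<n} (\<lambda>_. lborel::'a measure). fm (xs ` {..<n}) = Ftot n xs"
  using AE_inj[of n]
proof eventually_elim
  fix xs :: "nat \<Rightarrow> 'a" assume inj: "inj_on xs {..<n}"
  have "(\<Sum>Xs\<in>disjoint_tuples N (xs ` {..<n}). \<Prod>i<N. f (a ! i) (Xs i)) = (\<Sum>\<iota>\<in>Inj N n. FF a \<iota> n xs)"
    if a: "a \<in> A" for a
    unfolding FF_def by (rule DT_sum[OF inj]) (use fa_bern[OF a] bern_zero in auto)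
  then show "fm (xs ` {..<n}) = Ftot n xs"
    by (simp add: mbm_density_def Ftot_def)
qed

lemma rep_g:
  assumes gs: "gs \<in> GS"
  shows "AE xs in PiM {..<n} (\<lambda>_. lborel::'a measure). mb_density gs (xs ` {..<n}) = GG gs n xs"
  using AE_inj[of n]
proof eventually_elim
  fix xs :: "nat \<Rightarrow> 'a" assume inj: "inj_on xs {..<n}"
  have len: "length gs = N" using gs by (simp add: GS_def)
  show "mb_density gs (xs ` {..<n}) = GG gs n xs"
    unfolding mb_density_def GG_def len
    by (rule DT_sum[OF inj]) (use gs_bern[OF gs] bern_zero in auto)
qed

lemma Sg_cfgI:
  assumes gs: "gs \<in> GS" and \<iota>: "\<iota> \<in> Inj N n"
  shows "Sg gs (cfgI \<iota> n xs) = fact (N - n) * GG gs n xs"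
  unfolding Sg_def GG_def using perm_sum[OF \<iota>, of "\<lambda>j. gs ! j" xs] by simp


lemma meas_FF: "a \<in> A \<Longrightarrow> FF a \<iota> n \<in> borel_measurable (PiM {..<n} (\<lambda>_. lborel))"
  unfolding FF_def[abs_def] by (intro borel_measurable_prod bern_meas_cfgI fa_bern) auto

lemma meas_Ftot: "Ftot n \<in> borel_measurable (PiM {..<n} (\<lambda>_. lborel))"
  unfolding Ftot_def[abs_def] by (intro borel_measurable_sum borel_measurable_times borel_measurable_const meas_FF)

lemma meas_GG: "gs \<in> GS \<Longrightarrow> GG gs n \<in> borel_measurable (PiM {..<n} (\<lambda>_. lborel))"
  unfolding GG_def[abs_def] by (intro borel_measurable_sum borel_measurable_prod bern_meas_cfgI gs_bern) auto

lemma meas_Fa_cfgS: "a \<in> A \<Longrightarrow> (\<lambda>x. Fa a (cfgS S x)) \<in> borel_measurable (PiM S (\<lambda>_. lborel))"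
  unfolding Fa_def by (intro borel_measurable_prod bern_meas_cfgS fa_bern) auto

lemma meas_Sg_cfgS: "gs \<in> GS \<Longrightarrow> (\<lambda>x. Sg gs (cfgS S x)) \<in> borel_measurable (PiM S (\<lambda>_. lborel))"
  unfolding Sg_def
proof (intro borel_measurable_sum borel_measurable_prod bern_meas_cfgS gs_bern)
  fix \<pi> i assume "\<pi> \<in> {\<pi>. \<pi> permutes {..<N}}" "i \<in> {..<N}"
  then show "\<pi> i < N" by (metis lessThan_iff mem_Collect_eq permutes_in_image)
qed

lemma Fa_zero: "a \<in> A \<Longrightarrow> \<exists>i<N. finite (Xs i) \<and> 2 \<le> card (Xs i) \<Longrightarrow> Fa a Xs = 0"
proof -
  assume a: "a \<in> A" and "\<exists>i<N. finite (Xs i) \<and> 2 \<le> card (Xs i)"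
  then obtain i where i: "i < N" "finite (Xs i)" "2 \<le> card (Xs i)" by blast
  have "f (a ! i) (Xs i) = 0" using bern_zero[OF fa_bern[OF a i(1)] i(2,3)] .
  then show ?thesis unfolding Fa_def using i(1) by (intro prod_zero) auto
qed

lemma lab_rep:
  fixes \<psi> :: "real \<Rightarrow> real \<Rightarrow> ennreal"
  assumes a: "a \<in> A" and gs: "gs \<in> GS"
    and \<psi>0: "\<And>s. \<psi> 0 s = 0"
    and \<psi>m: "\<And>(M :: (nat \<Rightarrow> 'a) measure) F S. F \<in> borel_measurable M \<Longrightarrow> S \<in> borel_measurable M \<Longrightarrow> (\<lambda>x. \<psi> (F x) (S x)) \<in> borel_measurable M"
  shows "multi_nn_integral N (\<lambda>Xs. \<psi> (Fa a Xs) (Sg gs Xs)) = (\<Sum>n\<in>{..N}. ennreal (1 / fact n) *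
     (\<Sum>\<iota>\<in>Inj N n. \<integral>\<^sup>+xs. \<psi> (FF a \<iota> n xs) (fact (N - n) * GG gs n xs) \<partial>PiM {..<n} (\<lambda>_. lborel)))"
proof -
  have "multi_nn_integral N (\<lambda>Xs. \<psi> (Fa a Xs) (Sg gs Xs)) = (\<Sum>n\<in>{..N}. ennreal (1 / fact n) *
     (\<Sum>\<iota>\<in>Inj N n. \<integral>\<^sup>+xs. \<psi> (Fa a (cfgI \<iota> n xs)) (Sg gs (cfgI \<iota> n xs)) \<partial>PiM {..<n} (\<lambda>_. lborel)))"
  proof (rule multi_level)
    show "\<psi> (Fa a Xs) (Sg gs Xs) = 0" if "\<exists>i<N. finite (Xs i) \<and> 2 \<le> card (Xs i)" for Xs
      using Fa_zero[OF a that] \<psi>0 by simp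
    show "(\<lambda>x. \<psi> (Fa a (cfgS S x)) (Sg gs (cfgS S x))) \<in> borel_measurable (PiM S (\<lambda>_. lborel))" for S
      by (rule \<psi>m[OF meas_Fa_cfgS[OF a] meas_Sg_cfgS[OF gs]])
  qed
  also have "\<dots> = (\<Sum>n\<in>{..N}. ennreal (1 / fact n) *
     (\<Sum>\<iota>\<in>Inj N n. \<integral>\<^sup>+xs. \<psi> (FF a \<iota> n xs) (fact (N - n) * GG gs n xs) \<partial>PiM {..<n} (\<lambda>_. lborel)))"
    by (intro sum.cong refl arg_cong2[where f = "(*)"]) (simp add: Sg_cfgI[OF gs] FF_def Fa_def)
  finally show ?thesis .
qed

lemma unlab_rep:
  fixes \<phi> :: "real \<Rightarrow> real \<Rightarrow> ennreal"
  assumes gs: "gs \<in> GS" and \<phi>0: "\<phi> 0 0 = 0"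
  shows "rfs_nn_integral (\<lambda>X. \<phi> (fm X) (mb_density gs X)) =
    (\<Sum>n\<in>{..N}. ennreal (1 / fact n) * (\<integral>\<^sup>+xs. \<phi> (Ftot n xs) (GG gs n xs) \<partial>PiM {..<n} (\<lambda>_. lborel)))"
proof (rule rfs_rep)
  show "AE xs in PiM {..<n} (\<lambda>_. lborel). \<phi> (fm (xs ` {..<n})) (mb_density gs (xs ` {..<n})) = \<phi> (Ftot n xs) (GG gs n xs)" for n
    using rep_f[of n] rep_g[OF gs, of n] by eventually_elim simp
  show "\<phi> (Ftot n xs) (GG gs n xs) = 0" if "N < n" for n xs
    using that \<phi>0 by (simp add: Ftot_big GG_big)
qed

lemma unlab_rep_f:
  fixes \<phi> :: "real \<Rightarrow> ennreal"
  assumes \<phi>0: "\<phi> 0 = 0"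
  shows "rfs_nn_integral (\<lambda>X. \<phi> (fm X)) =
    (\<Sum>n\<in>{..N}. ennreal (1 / fact n) * (\<integral>\<^sup>+xs. \<phi> (Ftot n xs) \<partial>PiM {..<n} (\<lambda>_. lborel)))"
proof (rule rfs_rep)
  show "AE xs in PiM {..<n} (\<lambda>_. lborel). \<phi> (fm (xs ` {..<n})) = \<phi> (Ftot n xs)" for n
    using rep_f[of n] by eventually_elim simp
  show "\<phi> (Ftot n xs) = 0" if "N < n" for n xs
    using that \<phi>0 by (simp add: Ftot_big)
qed

lemma int_FF_le: "a \<in> A \<Longrightarrow> \<iota> \<in> Inj N n \<Longrightarrow> (\<integral>\<^sup>+xs. ennreal (FF a \<iota> n xs) \<partial>PiM {..<n} (\<lambda>_. lborel)) \<le> 1"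
  unfolding FF_def by (rule bern_family_bound) (use fa_bern in auto)

lemma int_GG_fin:
  assumes gs: "gs \<in> GS"
  shows "(\<integral>\<^sup>+xs. ennreal (GG gs n xs) \<partial>PiM {..<n} (\<lambda>_. lborel)) < \<infinity>"
proof -
  have "(\<integral>\<^sup>+xs. ennreal (GG gs n xs) \<partial>PiM {..<n} (\<lambda>_. lborel)) =
      (\<integral>\<^sup>+xs. (\<Sum>\<iota>\<in>Inj N n. ennreal (\<Prod>j<N. (gs ! j) (cfgI \<iota> n xs j))) \<partial>PiM {..<n} (\<lambda>_. lborel::'a measure))"
    unfolding GG_def
    by (intro nn_integral_cong sum_ennreal[symmetric] prod_nonneg) (use gs_bern[OF gs] bern_nonneg in auto)
  also have "\<dots> = (\<Sum>\<iota>\<in>Inj N n. \<integral>\<^sup>+xs. ennreal (\<Prod>j<N. (gs ! j) (cfgI \<iota> n xs j)) \<partial>PiM {..<n} (\<lambda>_. lborel::'a measure))"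
    by (intro nn_integral_sum measurable_compose[OF _ measurable_ennreal] borel_measurable_prod bern_meas_cfgI gs_bern[OF gs]) auto
  also have "\<dots> \<le> (\<Sum>\<iota>\<in>Inj N n. 1)"
    by (intro sum_mono bern_family_bound) (use gs_bern[OF gs] in auto)
  also have "\<dots> < \<infinity>" by (simp add: of_nat_less_top)
  finally show ?thesis .
qed

lemma int_Ftot_fin: "(\<integral>\<^sup>+xs. ennreal (Ftot n xs) \<partial>PiM {..<n} (\<lambda>_. lborel)) < \<infinity>"
proof -
  have "(\<integral>\<^sup>+xs. ennreal (Ftot n xs) \<partial>PiM {..<n} (\<lambda>_. lborel)) \<le>
      (\<integral>\<^sup>+xs. (\<Sum>a\<in>A. \<Sum>\<iota>\<in>Inj N n. ennreal (FF a \<iota> n xs)) \<partial>PiM {..<n} (\<lambda>_. lborel::'a measure))"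
  proof (rule nn_integral_mono)
    fix xs
    have "Ftot n xs \<le> (\<Sum>a\<in>A. \<Sum>\<iota>\<in>Inj N n. FF a \<iota> n xs)"
      unfolding Ftot_def
    proof (rule sum_mono)
      fix a assume a: "a \<in> A"
      show "w a * (\<Sum>\<iota>\<in>Inj N n. FF a \<iota> n xs) \<le> (\<Sum>\<iota>\<in>Inj N n. FF a \<iota> n xs)"
        using w_le1[OF a] FF_nonneg[OF a] by (intro mult_left_le_one_le sum_nonneg) (auto simp: w_nonneg[OF a])
    qed
    then have "ennreal (Ftot n xs) \<le> ennreal (\<Sum>a\<in>A. \<Sum>\<iota>\<in>Inj N n. FF a \<iota> n xs)" by (rule ennreal_leI)
    also have "\<dots> = (\<Sum>a\<in>A. \<Sum>\<iota>\<in>Inj N n. ennreal (FF a \<iota> n xs))"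
      using FF_nonneg by (simp add: sum_ennreal sum_nonneg)
    finally show "ennreal (Ftot n xs) \<le> (\<Sum>a\<in>A. \<Sum>\<iota>\<in>Inj N n. ennreal (FF a \<iota> n xs))" .
  qed
  also have "\<dots> = (\<Sum>a\<in>A. \<Sum>\<iota>\<in>Inj N n. \<integral>\<^sup>+xs. ennreal (FF a \<iota> n xs) \<partial>PiM {..<n} (\<lambda>_. lborel::'a measure))"
    using meas_FF by (simp add: nn_integral_sum)
  also have "\<dots> \<le> (\<Sum>a\<in>A. \<Sum>\<iota>\<in>Inj N n. 1)"
    by (intro sum_mono int_FF_le) auto
  also have "\<dots> < \<infinity>" by (simp add: of_nat_less_top ennreal_mult_less_top)
  finally show ?thesis .
qed

lemma int_FlnF_fin: "(\<integral>\<^sup>+xs. ennreal \<bar>Ftot n xs * ln (Ftot n xs)\<bar> \<partial>PiM {..<n} (\<lambda>_. lborel)) < \<infinity>"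
proof (cases "n \<le> N")
  case True
  have "(\<Sum>n\<in>{..N}. ennreal (1 / fact n) * (\<integral>\<^sup>+xs. ennreal \<bar>Ftot n xs * ln (Ftot n xs)\<bar> \<partial>PiM {..<n} (\<lambda>_. lborel::'a measure))) < \<infinity>"
    using ent_f unlab_rep_f[of "\<lambda>x. ennreal \<bar>x * ln x\<bar>"] by simp
  then have "ennreal (1 / fact n) * (\<integral>\<^sup>+xs. ennreal \<bar>Ftot n xs * ln (Ftot n xs)\<bar> \<partial>PiM {..<n} (\<lambda>_. lborel::'a measure)) < \<infinity>"
    using True by (simp add: ennreal_sum_less_top)
  then show ?thesis by (auto simp: ennreal_mult_less_top)
next
  case False
  then show ?thesis by (simp add: Ftot_big)
qed


lemma fact_ge1: "1 \<le> (fact m :: real)"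
  by (rule fact_ge_1)

lemma level_lab:
  assumes gs: "gs \<in> GS"
  shows "(\<Sum>a\<in>A. ennreal (w a) * (\<Sum>\<iota>\<in>Inj N n. \<integral>\<^sup>+xs. e2ennreal (xlogy (FF a \<iota> n xs) (fact (N - n) * GG gs n xs)) \<partial>PiM {..<n} (\<lambda>_. lborel)))
       + (\<integral>\<^sup>+xs. e2ennreal (- xlogy (Ftot n xs) (GG gs n xs)) \<partial>PiM {..<n} (\<lambda>_. lborel))
     = (\<Sum>a\<in>A. ennreal (w a) * (\<Sum>\<iota>\<in>Inj N n. \<integral>\<^sup>+xs. e2ennreal (- xlogy (FF a \<iota> n xs) (fact (N - n) * GG gs n xs)) \<partial>PiM {..<n} (\<lambda>_. lborel)))
       + (\<integral>\<^sup>+xs. e2ennreal (xlogy (Ftot n xs) (GG gs n xs)) \<partial>PiM {..<n} (\<lambda>_. lborel))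
       + (\<integral>\<^sup>+xs. ennreal (ln (fact (N - n)) * Ftot n xs) \<partial>PiM {..<n} (\<lambda>_. lborel::'a measure))"
  (is "?L = ?R")
proof -
  let ?M = "PiM {..<n} (\<lambda>_. lborel::'a measure)"
  let ?K = "fact (N - n) :: real"
  have mG: "(\<lambda>xs. ?K * GG gs n xs) \<in> borel_measurable ?M" using meas_GG[OF gs] by simp
  have mP: "(\<lambda>xs. e2ennreal (xlogy (FF a \<iota> n xs) (?K * GG gs n xs))) \<in> borel_measurable ?M"
    and mN: "(\<lambda>xs. e2ennreal (- xlogy (FF a \<iota> n xs) (?K * GG gs n xs))) \<in> borel_measurable ?M"
    if "a \<in> A" for a \<iota> using meas_e2x(1,2)[OF meas_FF[OF that] mG] by auto
  have mEP: "(\<lambda>xs. e2ennreal (xlogy (Ftot n xs) (GG gs n xs))) \<in> borel_measurable ?M"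
    and mEN: "(\<lambda>xs. e2ennreal (- xlogy (Ftot n xs) (GG gs n xs))) \<in> borel_measurable ?M"
    using meas_e2x(1,2)[OF meas_Ftot meas_GG[OF gs]] by auto
  have mC: "(\<lambda>xs. ennreal (ln ?K * Ftot n xs)) \<in> borel_measurable ?M"
    using meas_Ftot by measurable
  have pw: "(\<Sum>a\<in>A. ennreal (w a) * (\<Sum>\<iota>\<in>Inj N n. e2ennreal (xlogy (FF a \<iota> n xs) (?K * GG gs n xs))))
       + e2ennreal (- xlogy (Ftot n xs) (GG gs n xs))
     = (\<Sum>a\<in>A. ennreal (w a) * (\<Sum>\<iota>\<in>Inj N n. e2ennreal (- xlogy (FF a \<iota> n xs) (?K * GG gs n xs))))
       + e2ennreal (xlogy (Ftot n xs) (GG gs n xs)) + ennreal (ln ?K * Ftot n xs)" for xs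
    by (rule pw_lab[OF A_fin finite_Inj]) (use w_nonneg FF_nonneg GG_nonneg[OF gs] fact_ge1 in \<open>auto simp: Ftot_def\<close>)
  have intL: "(\<integral>\<^sup>+xs. (\<Sum>a\<in>A. ennreal (w a) * (\<Sum>\<iota>\<in>Inj N n. e2ennreal (xlogy (FF a \<iota> n xs) (?K * GG gs n xs))))
       + e2ennreal (- xlogy (Ftot n xs) (GG gs n xs)) \<partial>?M) = ?L"
    using mP mEN by (simp add: nn_integral_add nn_integral_sum nn_integral_cmult)
  have intR: "(\<integral>\<^sup>+xs. (\<Sum>a\<in>A. ennreal (w a) * (\<Sum>\<iota>\<in>Inj N n. e2ennreal (- xlogy (FF a \<iota> n xs) (?K * GG gs n xs))))
       + e2ennreal (xlogy (Ftot n xs) (GG gs n xs)) + ennreal (ln ?K * Ftot n xs) \<partial>?M) = ?R"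
    using mN mEP mC by (simp add: nn_integral_add nn_integral_sum nn_integral_cmult)
  show ?thesis using intL intR pw by simp
qed


lemma level_kl:
  assumes gs: "gs \<in> GS"
  shows "(\<integral>\<^sup>+xs. e2ennreal (kl_term (Ftot n xs) (GG gs n xs)) \<partial>PiM {..<n} (\<lambda>_. lborel))
       + (\<integral>\<^sup>+xs. e2ennreal (xlogy (Ftot n xs) (GG gs n xs)) \<partial>PiM {..<n} (\<lambda>_. lborel))
       + (\<integral>\<^sup>+xs. e2ennreal (- xlogy (Ftot n xs) (Ftot n xs)) \<partial>PiM {..<n} (\<lambda>_. lborel))
     = (\<integral>\<^sup>+xs. e2ennreal (- kl_term (Ftot n xs) (GG gs n xs)) \<partial>PiM {..<n} (\<lambda>_. lborel))
       + (\<integral>\<^sup>+xs. e2ennreal (- xlogy (Ftot n xs) (GG gs n xs)) \<partial>PiM {..<n} (\<lambda>_. lborel))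
       + (\<integral>\<^sup>+xs. e2ennreal (xlogy (Ftot n xs) (Ftot n xs)) \<partial>PiM {..<n} (\<lambda>_. lborel::'a measure))"
proof -
  let ?M = "PiM {..<n} (\<lambda>_. lborel::'a measure)"
  note m1 = meas_e2x[OF meas_Ftot meas_GG[OF gs], of n]
  note m2 = meas_e2x[OF meas_Ftot meas_Ftot, of n]
  have "(\<integral>\<^sup>+xs. e2ennreal (kl_term (Ftot n xs) (GG gs n xs)) + e2ennreal (xlogy (Ftot n xs) (GG gs n xs))
          + e2ennreal (- xlogy (Ftot n xs) (Ftot n xs)) \<partial>?M)
      = (\<integral>\<^sup>+xs. e2ennreal (- kl_term (Ftot n xs) (GG gs n xs)) + e2ennreal (- xlogy (Ftot n xs) (GG gs n xs))
          + e2ennreal (xlogy (Ftot n xs) (Ftot n xs)) \<partial>?M)"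
    by (intro nn_integral_cong pw_kl Ftot_nonneg GG_nonneg[OF gs])
  then show ?thesis using m1 m2 by (simp add: nn_integral_add)
qed

definition LP :: "('a set \<Rightarrow> real) list \<Rightarrow> 'h list \<Rightarrow> ennreal" where
  "LP gs a = multi_nn_integral N (\<lambda>Xs. e2ennreal (xlogy (Fa a Xs) (Sg gs Xs)))"
definition LN :: "('a set \<Rightarrow> real) list \<Rightarrow> 'h list \<Rightarrow> ennreal" where
  "LN gs a = multi_nn_integral N (\<lambda>Xs. e2ennreal (- xlogy (Fa a Xs) (Sg gs Xs)))"
definition EP :: "('a set \<Rightarrow> real) list \<Rightarrow> ennreal" where
  "EP gs = rfs_nn_integral (\<lambda>X. e2ennreal (xlogy (fm X) (mb_density gs X)))"
definition EN :: "('a set \<Rightarrow> real) list \<Rightarrow> ennreal" where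
  "EN gs = rfs_nn_integral (\<lambda>X. e2ennreal (- xlogy (fm X) (mb_density gs X)))"
definition KP :: "('a set \<Rightarrow> real) list \<Rightarrow> ennreal" where
  "KP gs = rfs_nn_integral (\<lambda>X. e2ennreal (kl_term (fm X) (mb_density gs X)))"
definition KN :: "('a set \<Rightarrow> real) list \<Rightarrow> ennreal" where
  "KN gs = rfs_nn_integral (\<lambda>X. e2ennreal (- kl_term (fm X) (mb_density gs X)))"
definition UPos :: ennreal where
  "UPos = rfs_nn_integral (\<lambda>X. e2ennreal (xlogy (fm X) (fm X)))"
definition UNeg :: ennreal where
  "UNeg = rfs_nn_integral (\<lambda>X. e2ennreal (- xlogy (fm X) (fm X)))"
definition CC :: ennreal where
  "CC = (\<Sum>n\<in>{..N}. ennreal (1 / fact n) * (\<integral>\<^sup>+xs. ennreal (ln (fact (N - n)) * Ftot n xs) \<partial>PiM {..<n} (\<lambda>_. lborel::'a measure)))"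

lemma xlogy_0: "xlogy 0 s = 0" by (simp add: xlogy_def)
lemma kl_0: "kl_term 0 s = 0" by (simp add: kl_term_def)

lemma LP_rep: "a \<in> A \<Longrightarrow> gs \<in> GS \<Longrightarrow> LP gs a = (\<Sum>n\<in>{..N}. ennreal (1 / fact n) *
     (\<Sum>\<iota>\<in>Inj N n. \<integral>\<^sup>+xs. e2ennreal (xlogy (FF a \<iota> n xs) (fact (N - n) * GG gs n xs)) \<partial>PiM {..<n} (\<lambda>_. lborel)))"
  unfolding LP_def by (rule lab_rep) (auto simp: xlogy_0 intro: meas_e2x)

lemma LN_rep: "a \<in> A \<Longrightarrow> gs \<in> GS \<Longrightarrow> LN gs a = (\<Sum>n\<in>{..N}. ennreal (1 / fact n) *
     (\<Sum>\<iota>\<in>Inj N n. \<integral>\<^sup>+xs. e2ennreal (- xlogy (FF a \<iota> n xs) (fact (N - n) * GG gs n xs)) \<partial>PiM {..<n} (\<lambda>_. lborel)))"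
  unfolding LN_def by (rule lab_rep[where \<psi> = "\<lambda>p s. e2ennreal (- xlogy p s)"]) (auto simp: xlogy_0 intro: meas_e2x)

lemma EP_rep: "gs \<in> GS \<Longrightarrow> EP gs = (\<Sum>n\<in>{..N}. ennreal (1 / fact n) *
     (\<integral>\<^sup>+xs. e2ennreal (xlogy (Ftot n xs) (GG gs n xs)) \<partial>PiM {..<n} (\<lambda>_. lborel)))"
  unfolding EP_def by (rule unlab_rep) (simp_all add: xlogy_0)

lemma EN_rep: "gs \<in> GS \<Longrightarrow> EN gs = (\<Sum>n\<in>{..N}. ennreal (1 / fact n) *
     (\<integral>\<^sup>+xs. e2ennreal (- xlogy (Ftot n xs) (GG gs n xs)) \<partial>PiM {..<n} (\<lambda>_. lborel)))"
  unfolding EN_def by (rule unlab_rep[where \<phi> = "\<lambda>p s. e2ennreal (- xlogy p s)"]) (simp_all add: xlogy_0)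

lemma KP_rep: "gs \<in> GS \<Longrightarrow> KP gs = (\<Sum>n\<in>{..N}. ennreal (1 / fact n) *
     (\<integral>\<^sup>+xs. e2ennreal (kl_term (Ftot n xs) (GG gs n xs)) \<partial>PiM {..<n} (\<lambda>_. lborel)))"
  unfolding KP_def by (rule unlab_rep) (simp_all add: kl_0)

lemma KN_rep: "gs \<in> GS \<Longrightarrow> KN gs = (\<Sum>n\<in>{..N}. ennreal (1 / fact n) *
     (\<integral>\<^sup>+xs. e2ennreal (- kl_term (Ftot n xs) (GG gs n xs)) \<partial>PiM {..<n} (\<lambda>_. lborel)))"
  unfolding KN_def by (rule unlab_rep[where \<phi> = "\<lambda>p s. e2ennreal (- kl_term p s)"]) (simp_all add: kl_0)

lemma UPos_rep: "UPos = (\<Sum>n\<in>{..N}. ennreal (1 / fact n) *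
     (\<integral>\<^sup>+xs. e2ennreal (xlogy (Ftot n xs) (Ftot n xs)) \<partial>PiM {..<n} (\<lambda>_. lborel)))"
  unfolding UPos_def by (rule unlab_rep_f[where \<phi> = "\<lambda>p. e2ennreal (xlogy p p)"]) (simp add: xlogy_0)

lemma UNeg_rep: "UNeg = (\<Sum>n\<in>{..N}. ennreal (1 / fact n) *
     (\<integral>\<^sup>+xs. e2ennreal (- xlogy (Ftot n xs) (Ftot n xs)) \<partial>PiM {..<n} (\<lambda>_. lborel)))"
  unfolding UNeg_def by (rule unlab_rep_f[where \<phi> = "\<lambda>p. e2ennreal (- xlogy p p)"]) (simp add: xlogy_0)


lemma S1:
  assumes gs: "gs \<in> GS"
  shows "(\<Sum>a\<in>A. ennreal (w a) * LP gs a) + EN gs = (\<Sum>a\<in>A. ennreal (w a) * LN gs a) + EP gs + CC"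
proof -
  define c where "c n = ennreal (1 / fact n)" for n :: nat
  define X where "X a n = (\<Sum>\<iota>\<in>Inj N n. \<integral>\<^sup>+xs. e2ennreal (xlogy (FF a \<iota> n xs) (fact (N - n) * GG gs n xs)) \<partial>PiM {..<n} (\<lambda>_. lborel::'a measure))" for a n
  define Y where "Y a n = (\<Sum>\<iota>\<in>Inj N n. \<integral>\<^sup>+xs. e2ennreal (- xlogy (FF a \<iota> n xs) (fact (N - n) * GG gs n xs)) \<partial>PiM {..<n} (\<lambda>_. lborel::'a measure))" for a n
  define e where "e n = (\<integral>\<^sup>+xs. e2ennreal (- xlogy (Ftot n xs) (GG gs n xs)) \<partial>PiM {..<n} (\<lambda>_. lborel::'a measure))" for n
  define p where "p n = (\<integral>\<^sup>+xs. e2ennreal (xlogy (Ftot n xs) (GG gs n xs)) \<partial>PiM {..<n} (\<lambda>_. lborel::'a measure))" for n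
  define k where "k n = (\<integral>\<^sup>+xs. ennreal (ln (fact (N - n)) * Ftot n xs) \<partial>PiM {..<n} (\<lambda>_. lborel::'a measure))" for n
  have lvl: "(\<Sum>a\<in>A. ennreal (w a) * X a n) + e n = (\<Sum>a\<in>A. ennreal (w a) * Y a n) + p n + k n" for n
    unfolding X_def Y_def e_def p_def k_def by (rule level_lab[OF gs])
  have LPr: "(\<Sum>a\<in>A. ennreal (w a) * LP gs a) = (\<Sum>n\<in>{..N}. c n * (\<Sum>a\<in>A. ennreal (w a) * X a n))"
  proof -
    have "(\<Sum>a\<in>A. ennreal (w a) * LP gs a) = (\<Sum>a\<in>A. ennreal (w a) * (\<Sum>n\<in>{..N}. c n * X a n))"
      by (rule sum.cong[OF refl]) (simp add: LP_rep[OF _ gs] c_def X_def)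
    then show ?thesis by (simp only: sum_swap_w)
  qed
  have LNr: "(\<Sum>a\<in>A. ennreal (w a) * LN gs a) = (\<Sum>n\<in>{..N}. c n * (\<Sum>a\<in>A. ennreal (w a) * Y a n))"
  proof -
    have "(\<Sum>a\<in>A. ennreal (w a) * LN gs a) = (\<Sum>a\<in>A. ennreal (w a) * (\<Sum>n\<in>{..N}. c n * Y a n))"
      by (rule sum.cong[OF refl]) (simp add: LN_rep[OF _ gs] c_def Y_def)
    then show ?thesis by (simp only: sum_swap_w)
  qed
  have ENr: "EN gs = (\<Sum>n\<in>{..N}. c n * e n)" by (simp add: EN_rep[OF gs] c_def e_def)
  have EPr: "EP gs = (\<Sum>n\<in>{..N}. c n * p n)" by (simp add: EP_rep[OF gs] c_def p_def)
  have CCr: "CC = (\<Sum>n\<in>{..N}. c n * k n)" by (simp add: CC_def c_def k_def)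
  have "(\<Sum>a\<in>A. ennreal (w a) * LP gs a) + EN gs = (\<Sum>n\<in>{..N}. c n * ((\<Sum>a\<in>A. ennreal (w a) * X a n) + e n))"
    unfolding LPr ENr by (simp add: sum.distrib distrib_left)
  also have "\<dots> = (\<Sum>n\<in>{..N}. c n * ((\<Sum>a\<in>A. ennreal (w a) * Y a n) + p n + k n))"
    by (simp only: lvl)
  also have "\<dots> = (\<Sum>a\<in>A. ennreal (w a) * LN gs a) + EP gs + CC"
    unfolding LNr EPr CCr by (simp add: sum.distrib distrib_left)
  finally show ?thesis .
qed

lemma S2:
  assumes gs: "gs \<in> GS"
  shows "KP gs + EP gs + UNeg = KN gs + EN gs + UPos"
proof -
  define c where "c n = ennreal (1 / fact n)" for n :: nat
  have "KP gs + EP gs + UNeg = (\<Sum>n\<in>{..N}. c n * (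
         (\<integral>\<^sup>+xs. e2ennreal (kl_term (Ftot n xs) (GG gs n xs)) \<partial>PiM {..<n} (\<lambda>_. lborel))
       + (\<integral>\<^sup>+xs. e2ennreal (xlogy (Ftot n xs) (GG gs n xs)) \<partial>PiM {..<n} (\<lambda>_. lborel))
       + (\<integral>\<^sup>+xs. e2ennreal (- xlogy (Ftot n xs) (Ftot n xs)) \<partial>PiM {..<n} (\<lambda>_. lborel::'a measure))))"
    by (simp add: KP_rep[OF gs] EP_rep[OF gs] UNeg_rep c_def sum.distrib distrib_left)
  also have "\<dots> = (\<Sum>n\<in>{..N}. c n * (
         (\<integral>\<^sup>+xs. e2ennreal (- kl_term (Ftot n xs) (GG gs n xs)) \<partial>PiM {..<n} (\<lambda>_. lborel))
       + (\<integral>\<^sup>+xs. e2ennreal (- xlogy (Ftot n xs) (GG gs n xs)) \<partial>PiM {..<n} (\<lambda>_. lborel))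
       + (\<integral>\<^sup>+xs. e2ennreal (xlogy (Ftot n xs) (Ftot n xs)) \<partial>PiM {..<n} (\<lambda>_. lborel::'a measure))))"
    by (simp only: level_kl[OF gs])
  also have "\<dots> = KN gs + EN gs + UPos"
    by (simp add: KN_rep[OF gs] EN_rep[OF gs] UPos_rep c_def sum.distrib distrib_left)
  finally show ?thesis .
qed


lemma meas_FlnF: "(\<lambda>xs. \<bar>Ftot n xs * ln (Ftot n xs)\<bar>) \<in> borel_measurable (PiM {..<n} (\<lambda>_. lborel))"
  using meas_Ftot by measurable

lemma sum_fin_helper:
  fixes X :: "nat \<Rightarrow> ennreal"
  assumes "\<And>n. X n < \<infinity>"
  shows "(\<Sum>n\<in>{..N}. ennreal (1 / fact n) * X n) < \<infinity>"
  using assms by (simp add: ennreal_mult_less_top)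

lemma fin_LP:
  assumes a: "a \<in> A" and wa: "0 < w a" and gs: "gs \<in> GS"
  shows "LP gs a < \<infinity>"
proof -
  have "(\<integral>\<^sup>+xs. e2ennreal (xlogy (FF a \<iota> n xs) (fact (N - n) * GG gs n xs)) \<partial>PiM {..<n} (\<lambda>_. lborel)) < \<infinity>"
    if \<iota>: "\<iota> \<in> Inj N n" for \<iota> n
  proof -
    let ?M = "PiM {..<n} (\<lambda>_. lborel::'a measure)"
    have "(\<integral>\<^sup>+xs. e2ennreal (xlogy (FF a \<iota> n xs) (fact (N - n) * GG gs n xs)) \<partial>?M)
        \<le> (\<integral>\<^sup>+xs. ennreal ((1 / w a) * \<bar>Ftot n xs * ln (Ftot n xs)\<bar> + (ln (1 / w a) / w a) * Ftot n xs + fact (N - n) * GG gs n xs) \<partial>?M)"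
    proof (rule nn_integral_mono)
      fix xs
      have "e2ennreal (xlogy (FF a \<iota> n xs) (fact (N - n) * GG gs n xs))
          \<le> ennreal (\<bar>Ftot n xs * ln (Ftot n xs)\<bar> / w a + Ftot n xs * ln (1 / w a) / w a + fact (N - n) * GG gs n xs)"
        by (rule gibbs_w) (use wa w_le1[OF a] FF_nonneg[OF a] FF_le[OF a \<iota>] GG_nonneg[OF gs] in auto)
      also have "\<dots> = ennreal ((1 / w a) * \<bar>Ftot n xs * ln (Ftot n xs)\<bar> + (ln (1 / w a) / w a) * Ftot n xs + fact (N - n) * GG gs n xs)"
        by (simp add: field_simps)
      finally show "e2ennreal (xlogy (FF a \<iota> n xs) (fact (N - n) * GG gs n xs)) \<le> ennreal ((1 / w a) * \<bar>Ftot n xs * ln (Ftot n xs)\<bar> + (ln (1 / w a) / w a) * Ftot n xs + fact (N - n) * GG gs n xs)" .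
    qed
    also have "\<dots> < \<infinity>"
    proof (rule int3_fin[OF meas_FlnF meas_Ftot meas_GG[OF gs]])
      show "0 \<le> ln (1 / w a) / w a" using wa w_le1[OF a] by simp
    qed (use Ftot_nonneg GG_nonneg[OF gs] int_FlnF_fin int_Ftot_fin int_GG_fin[OF gs] wa in auto)
    finally show ?thesis .
  qed
  then show ?thesis unfolding LP_rep[OF a gs] by (intro sum_fin_helper) simp
qed

lemma fin_EP:
  assumes gs: "gs \<in> GS"
  shows "EP gs < \<infinity>"
proof -
  have "(\<integral>\<^sup>+xs. e2ennreal (xlogy (Ftot n xs) (GG gs n xs)) \<partial>PiM {..<n} (\<lambda>_. lborel)) < \<infinity>" for n
  proof -
    let ?M = "PiM {..<n} (\<lambda>_. lborel::'a measure)"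
    have "(\<integral>\<^sup>+xs. e2ennreal (xlogy (Ftot n xs) (GG gs n xs)) \<partial>?M)
        \<le> (\<integral>\<^sup>+xs. ennreal (1 * \<bar>Ftot n xs * ln (Ftot n xs)\<bar> + 0 * Ftot n xs + 1 * GG gs n xs) \<partial>?M)"
    proof (rule nn_integral_mono)
      fix xs
      have "e2ennreal (xlogy (Ftot n xs) (GG gs n xs))
          \<le> ennreal (\<bar>Ftot n xs * ln (Ftot n xs)\<bar> / 1 + Ftot n xs * ln (1 / 1) / 1 + GG gs n xs)"
        by (rule gibbs_w) (use Ftot_nonneg GG_nonneg[OF gs] in auto)
      then show "e2ennreal (xlogy (Ftot n xs) (GG gs n xs)) \<le> ennreal (1 * \<bar>Ftot n xs * ln (Ftot n xs)\<bar> + 0 * Ftot n xs + 1 * GG gs n xs)"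
        by simp
    qed
    also have "\<dots> < \<infinity>"
      by (rule int3_fin[OF meas_FlnF meas_Ftot meas_GG[OF gs]])
         (use Ftot_nonneg GG_nonneg[OF gs] int_FlnF_fin int_Ftot_fin int_GG_fin[OF gs] in auto)
    finally show ?thesis .
  qed
  then show ?thesis unfolding EP_rep[OF gs] by (intro sum_fin_helper)
qed

lemma fin_CC: "CC < \<infinity>"
  unfolding CC_def
proof (intro sum_fin_helper)
  fix n
  have "(\<integral>\<^sup>+xs. ennreal (ln (fact (N - n)) * Ftot n xs) \<partial>PiM {..<n} (\<lambda>_. lborel::'a measure))
      = ennreal (ln (fact (N - n))) * (\<integral>\<^sup>+xs. ennreal (Ftot n xs) \<partial>PiM {..<n} (\<lambda>_. lborel::'a measure))"
    using meas_Ftot Ftot_nonneg fact_ge1[of "N - n"]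
    by (simp add: ennreal_mult nn_integral_cmult)
  also have "\<dots> < \<infinity>" using int_Ftot_fin by (simp add: ennreal_mult_less_top)
  finally show "(\<integral>\<^sup>+xs. ennreal (ln (fact (N - n)) * Ftot n xs) \<partial>PiM {..<n} (\<lambda>_. lborel::'a measure)) < \<infinity>" .
qed

lemma fin_KN:
  assumes gs: "gs \<in> GS"
  shows "KN gs < \<infinity>"
proof -
  have "(\<integral>\<^sup>+xs. e2ennreal (- kl_term (Ftot n xs) (GG gs n xs)) \<partial>PiM {..<n} (\<lambda>_. lborel)) < \<infinity>" for n
  proof -
    have "(\<integral>\<^sup>+xs. e2ennreal (- kl_term (Ftot n xs) (GG gs n xs)) \<partial>PiM {..<n} (\<lambda>_. lborel))
        \<le> (\<integral>\<^sup>+xs. ennreal (GG gs n xs) \<partial>PiM {..<n} (\<lambda>_. lborel::'a measure))"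
      by (intro nn_integral_mono kl_neg_bound Ftot_nonneg GG_nonneg[OF gs])
    also have "\<dots> < \<infinity>" by (rule int_GG_fin[OF gs])
    finally show ?thesis .
  qed
  then show ?thesis unfolding KN_rep[OF gs] by (intro sum_fin_helper)
qed

lemma xlogy_self_bound: "0 \<le> p \<Longrightarrow> e2ennreal (xlogy p p) \<le> ennreal \<bar>p * ln p\<bar> \<and> e2ennreal (- xlogy p p) \<le> ennreal \<bar>p * ln p\<bar>"
  by (cases "p = 0") (auto simp: xlogy_def e2ennreal_ereal intro: ennreal_leI)

lemma fin_U: "UPos < \<infinity>" "UNeg < \<infinity>"
proof -
  have b1: "(\<integral>\<^sup>+xs. e2ennreal (xlogy (Ftot n xs) (Ftot n xs)) \<partial>PiM {..<n} (\<lambda>_. lborel::'a measure)) < \<infinity>" for n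
  proof -
    have "(\<integral>\<^sup>+xs. e2ennreal (xlogy (Ftot n xs) (Ftot n xs)) \<partial>PiM {..<n} (\<lambda>_. lborel::'a measure))
        \<le> (\<integral>\<^sup>+xs. ennreal \<bar>Ftot n xs * ln (Ftot n xs)\<bar> \<partial>PiM {..<n} (\<lambda>_. lborel::'a measure))"
      by (intro nn_integral_mono) (use xlogy_self_bound[OF Ftot_nonneg] in blast)
    then show ?thesis using int_FlnF_fin[of n] by (rule le_less_trans)
  qed
  have b2: "(\<integral>\<^sup>+xs. e2ennreal (- xlogy (Ftot n xs) (Ftot n xs)) \<partial>PiM {..<n} (\<lambda>_. lborel::'a measure)) < \<infinity>" for n
  proof -
    have "(\<integral>\<^sup>+xs. e2ennreal (- xlogy (Ftot n xs) (Ftot n xs)) \<partial>PiM {..<n} (\<lambda>_. lborel::'a measure))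
        \<le> (\<integral>\<^sup>+xs. ennreal \<bar>Ftot n xs * ln (Ftot n xs)\<bar> \<partial>PiM {..<n} (\<lambda>_. lborel::'a measure))"
      by (intro nn_integral_mono) (use xlogy_self_bound[OF Ftot_nonneg] in blast)
    then show ?thesis using int_FlnF_fin[of n] by (rule le_less_trans)
  qed
  show "UPos < \<infinity>" unfolding UPos_rep by (intro sum_fin_helper b1)
  show "UNeg < \<infinity>" unfolding UNeg_rep by (intro sum_fin_helper b2)
qed


lemma Lobj_eq:
  assumes gs: "gs \<in> GS"
  shows "(\<Sum>a\<in>A. ereal (w a) * multi_integral N (\<lambda>Xs. xlogy (\<Prod>i<N. f (a ! i) (Xs i))
                 (\<Sum>\<pi> | \<pi> permutes {..<N}. \<Prod>i<N. (gs ! \<pi> i) (Xs i))))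
       = rfs_integral (\<lambda>X. xlogy (fm X) (mb_density gs X)) + enn2ereal CC"
proof -
  have mi: "multi_integral N (\<lambda>Xs. xlogy (\<Prod>i<N. f (a ! i) (Xs i)) (\<Sum>\<pi> | \<pi> permutes {..<N}. \<Prod>i<N. (gs ! \<pi> i) (Xs i)))
      = enn2ereal (LP gs a) - enn2ereal (LN gs a)" for a
    by (simp add: multi_integral_def LP_def LN_def Fa_def Sg_def)
  have finw: "ennreal (w a) * LP gs a < \<infinity>" if a: "a \<in> A" for a
  proof (cases "w a = 0")
    case False
    then have "0 < w a" using w_nonneg[OF a] by simp
    then show ?thesis using fin_LP[OF a _ gs] by (simp add: ennreal_mult_less_top)
  qed simp
  have "(\<Sum>a\<in>A. ereal (w a) * multi_integral N (\<lambda>Xs. xlogy (\<Prod>i<N. f (a ! i) (Xs i))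
                 (\<Sum>\<pi> | \<pi> permutes {..<N}. \<Prod>i<N. (gs ! \<pi> i) (Xs i))))
      = (\<Sum>a\<in>A. enn2ereal (ennreal (w a) * LP gs a) - enn2ereal (ennreal (w a) * LN gs a))"
  proof (rule sum.cong[OF refl])
    fix a assume a: "a \<in> A"
    have "w a = 0 \<or> LP gs a < \<infinity>"
    proof (cases "w a = 0")
      case False then show ?thesis using fin_LP[OF a _ gs] w_nonneg[OF a] by simp
    qed simp
    then show "ereal (w a) * multi_integral N (\<lambda>Xs. xlogy (\<Prod>i<N. f (a ! i) (Xs i))
                 (\<Sum>\<pi> | \<pi> permutes {..<N}. \<Prod>i<N. (gs ! \<pi> i) (Xs i)))
        = enn2ereal (ennreal (w a) * LP gs a) - enn2ereal (ennreal (w a) * LN gs a)"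
      unfolding mi by (rule ereal_wdiff[OF w_nonneg[OF a]])
  qed
  also have "\<dots> = enn2ereal (\<Sum>a\<in>A. ennreal (w a) * LP gs a) - enn2ereal (\<Sum>a\<in>A. ennreal (w a) * LN gs a)"
    by (rule ereal_sumdiff[OF A_fin finw])
  also have "\<dots> = (enn2ereal (EP gs) - enn2ereal (EN gs)) + enn2ereal CC"
  proof (rule ereal_S1[OF S1[OF gs]])
    show "(\<Sum>a\<in>A. ennreal (w a) * LP gs a) < \<infinity>" using finw A_fin by (simp add: ennreal_sum_less_top)
  qed (use fin_EP[OF gs] fin_CC in auto)
  also have "enn2ereal (EP gs) - enn2ereal (EN gs) = rfs_integral (\<lambda>X. xlogy (fm X) (mb_density gs X))"
    by (simp add: rfs_integral_def EP_def EN_def)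
  finally show ?thesis .
qed

lemma KL_eq:
  assumes gs: "gs \<in> GS"
  shows "rfs_integral (\<lambda>X. kl_term (fm X) (mb_density gs X))
       = (enn2ereal UPos - enn2ereal UNeg) - rfs_integral (\<lambda>X. xlogy (fm X) (mb_density gs X))"
proof -
  have "rfs_integral (\<lambda>X. kl_term (fm X) (mb_density gs X)) = enn2ereal (KP gs) - enn2ereal (KN gs)"
    by (simp add: rfs_integral_def KP_def KN_def)
  also have "\<dots> = (enn2ereal UPos - enn2ereal UNeg) - (enn2ereal (EP gs) - enn2ereal (EN gs))"
    by (rule ereal_S2[OF S2[OF gs] fin_KN[OF gs] fin_EP[OF gs] fin_U(2) fin_U(1)])
  also have "enn2ereal (EP gs) - enn2ereal (EN gs) = rfs_integral (\<lambda>X. xlogy (fm X) (mb_density gs X))"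
    by (simp add: rfs_integral_def EP_def EN_def)
  finally show ?thesis .
qed

lemma fin_ereal: "(P::ennreal) < \<infinity> \<Longrightarrow> \<bar>enn2ereal P\<bar> \<noteq> \<infinity>"
  by (erule enn_fin_obtain) simp

end

theorem theorem5:
  fixes H :: "'h set" and A :: "'h list set" and w :: "'h list \<Rightarrow> real"
    and f :: "'h \<Rightarrow> 'a::euclidean_space set \<Rightarrow> real" and N :: nat
  assumes bern_f: "\<And>h. h \<in> H \<Longrightarrow> is_bernoulli (f h)"
    and A_fin: "finite A"
    and A_sub: "\<And>a. a \<in> A \<Longrightarrow> length a = N \<and> set a \<subseteq> H"
    and w_nonneg: "\<And>a. a \<in> A \<Longrightarrow> 0 \<le> w a"
    and w_sum: "(\<Sum>a\<in>A. w a) = 1"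
    and ent_f: "rfs_nn_integral (\<lambda>X. ennreal \<bar>mbm_density A w f N X * ln (mbm_density A w f N X)\<bar>) < \<infinity>"
    and ent_fh: "\<And>h. h \<in> H \<Longrightarrow> rfs_nn_integral (\<lambda>X. ennreal \<bar>f h X * ln (f h X)\<bar>) < \<infinity>"
  defines "G \<equiv> {gs :: ('a set \<Rightarrow> real) list. length gs = N \<and> (\<forall>g\<in>set gs. is_bernoulli g)}"
  shows "argmax_on G (\<lambda>gs. \<Sum>a\<in>A. ereal (w a) *
            multi_integral N (\<lambda>Xs. xlogy (\<Prod>i<N. f (a ! i) (Xs i))
                 (\<Sum>\<pi> | \<pi> permutes {..<N}. \<Prod>i<N. (gs ! \<pi> i) (Xs i))))
         = argmin_on G (\<lambda>gs. rfs_integral (\<lambda>X. kl_term (mbm_density A w f N X) (mb_density gs X)))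
    \<and> argmin_on G (\<lambda>gs. rfs_integral (\<lambda>X. kl_term (mbm_density A w f N X) (mb_density gs X)))
         = argmax_on G (\<lambda>gs. rfs_integral (\<lambda>X. xlogy (mbm_density A w f N X) (mb_density gs X)))"
  proof -
  interpret mbm_setting H A w f N
    by unfold_locales (use bern_f A_fin A_sub w_nonneg w_sum ent_f in auto)
  have G: "G = GS" unfolding G_def GS_def by simp
  have 1: "argmax_on G (\<lambda>gs. \<Sum>a\<in>A. ereal (w a) *
            multi_integral N (\<lambda>Xs. xlogy (\<Prod>i<N. f (a ! i) (Xs i))
                 (\<Sum>\<pi> | \<pi> permutes {..<N}. \<Prod>i<N. (gs ! \<pi> i) (Xs i))))
      = argmax_on G (\<lambda>gs. rfs_integral (\<lambda>X. xlogy (mbm_density A w f N X) (mb_density gs X)))"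
    by (rule argmax_shift[where c = "enn2ereal CC"]) (use Lobj_eq fin_ereal[OF fin_CC] G in auto)
  have 2: "argmin_on G (\<lambda>gs. rfs_integral (\<lambda>X. kl_term (mbm_density A w f N X) (mb_density gs X)))
      = argmax_on G (\<lambda>gs. rfs_integral (\<lambda>X. xlogy (mbm_density A w f N X) (mb_density gs X)))"
  proof (rule argmin_neg[where d = "enn2ereal UPos - enn2ereal UNeg"])
    obtain u1 where "0 \<le> u1" "UPos = ennreal u1" using fin_U(1) by (rule enn_fin_obtain)
    moreover obtain u2 where "0 \<le> u2" "UNeg = ennreal u2" using fin_U(2) by (rule enn_fin_obtain)
    ultimately show "\<bar>enn2ereal UPos - enn2ereal UNeg\<bar> \<noteq> \<infinity>" by simp
  qed (use KL_eq G in auto)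
  show ?thesis using 1 2 by simp
qed

end
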